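(* Let $A\in\mathbb{C}^{n\times n}$ with $\mathrm{Ind}(A)=k$ be written in the core-EP decomposition $A=U\begin{bmatrix}T&S\\0&N\end{bmatrix}U^*$ (as in the context), and let $m\in\mathbb{N}=\{1,2,\dots\}$. For $\ell\in\mathbb{N}$ put $\tilde{T}_\ell=\sum_{i=0}^{\ell-1}T^iSN^{\ell-1-i}$. Then: (a) $A^{\#_m}=A^\dagger$ if and only if $S=0$ and $N=0$; (b) $A^{\#_m}=A^d$ if and only if $\tilde{T}_mP_{N^m}=T^{m-k}\tilde{T}_k$; (c) $A^{\#_m}=A^{\mathrm{cEP}}$ if and only if $\tilde{T}_mN^m=0$; (d) $A^{\#_m}=A^{d,\dagger}$ if and only if $\tilde{T}_mP_{N^m}=T^{m-k}\tilde{T}_kP_N$; (e) $A^{\#_m}=A^{\mathrm{WC}}$ if and only if $\tilde{T}_mP_{N^m}=T^{m-1}SP_N$; (f) $A^{\#_m}=A^{\mathrm{WG}_m}$ if and only if $\mathcal{N}((N^m)^* )\subseteq\mathcal{N}(\tilde{T}_m)$.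
   Context: Core-EP decomposition: every $A\in\mathbb{C}^{n\times n}$ of index $k$ can be written as $A=U\begin{bmatrix}T&S\\0&N\end{bmatrix}U^*$ with $U$ unitary, $T\in\mathbb{C}^{t\times t}$ nonsingular, $t=\mathrm{rk}(A^k)$, and $N\in\mathbb{C}^{(n-t)\times(n-t)}$ nilpotent of index $k$ (blocks of size zero allowed). The index $\mathrm{Ind}(A)$ is the smallest nonnegative integer $k$ with $\mathcal{R}(A^k)=\mathcal{R}(A^{k+1})$, $A^0=I$. For a matrix $B$: $B^\dagger$ Moore–Penrose inverse, $P_B=BB^\dagger$, $\mathcal{R}(\cdot)$, $\mathcal{N}(\cdot)$ column space and null space. $A^d$ is the Drazin inverse (unique $X$ with $XAX=X$, $AX=XA$, $XA^{k+1}=A^k$). The DMP inverse is $A^{d,\dagger}:=A^dAA^\dagger$. The core-EP inverse $A^{\mathrm{cEP}}$ is the unique $X$ with $XAX=X$ and $\mathcal{R}(X)=\mathcal{R}(X^* )=\mathcal{R}(A^k)$. The WG inverse is $A^{\mathrm{WG}}:=(A^{\mathrm{cEP}})^2A$ and the WC inverse is $A^{\mathrm{WC}}:=A^{\mathrm{WG}}P_A$. For $m\in\mathbb{N}$, the $m$-weak group inverse is $A^{\mathrm{WG}_m}:=(A^{\mathrm{cEP}})^{m+1}A^m$ and the $m$-weak core inverse is $A^{\#_m}:=A^{\mathrm{WG}_m}P_{A^m}$. *)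

theory Defs
  imports "Jordan_Normal_Form.Schur_Decomposition" "Jordan_Normal_Form.Matrix_Kernel"
          "Jordan_Normal_Form.DL_Rank"
begin

definition mat_range :: "complex mat \<Rightarrow> complex vec set" where
  "mat_range A = {A *\<^sub>v x | x. x \<in> carrier_vec (dim_col A)}"

definition mat_index :: "complex mat \<Rightarrow> nat" where
  "mat_index A = (LEAST k. mat_range (A ^\<^sub>m k) = mat_range (A ^\<^sub>m Suc k))"

definition mp_inverse :: "complex mat \<Rightarrow> complex mat" where
  "mp_inverse A = (THE X. X \<in> carrier_mat (dim_col A) (dim_row A) \<and>
      A * X * A = A \<and> X * A * X = X \<and>
      mat_adjoint (A * X) = A * X \<and> mat_adjoint (X * A) = X * A)"

definition proj :: "complex mat \<Rightarrow> complex mat" where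
  "proj B = B * mp_inverse B"

definition drazin :: "complex mat \<Rightarrow> complex mat" where
  "drazin A = (THE X. X \<in> carrier_mat (dim_row A) (dim_row A) \<and>
      X * A * X = X \<and> A * X = X * A \<and>
      X * A ^\<^sub>m (Suc (mat_index A)) = A ^\<^sub>m (mat_index A))"

definition dmp_inverse :: "complex mat \<Rightarrow> complex mat" where
  "dmp_inverse A = drazin A * A * mp_inverse A"

definition core_ep :: "complex mat \<Rightarrow> complex mat" where
  "core_ep A = (THE X. X \<in> carrier_mat (dim_row A) (dim_row A) \<and>
      X * A * X = X \<and> mat_range X = mat_range (A ^\<^sub>m (mat_index A)) \<and>
      mat_range (mat_adjoint X) = mat_range (A ^\<^sub>m (mat_index A)))"

definition wg_inverse :: "complex mat \<Rightarrow> complex mat" where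
  "wg_inverse A = (core_ep A ^\<^sub>m 2) * A"

definition wc_inverse :: "complex mat \<Rightarrow> complex mat" where
  "wc_inverse A = wg_inverse A * proj A"

definition mwg_inverse :: "nat \<Rightarrow> complex mat \<Rightarrow> complex mat" where
  "mwg_inverse m A = (core_ep A ^\<^sub>m (Suc m)) * (A ^\<^sub>m m)"

definition mwc_inverse :: "nat \<Rightarrow> complex mat \<Rightarrow> complex mat" where
  "mwc_inverse m A = mwg_inverse m A * proj (A ^\<^sub>m m)"

definition mat_inv :: "complex mat \<Rightarrow> complex mat" where
  "mat_inv T = (THE B. B \<in> carrier_mat (dim_row T) (dim_row T) \<and>
      T * B = 1\<^sub>m (dim_row T) \<and> B * T = 1\<^sub>m (dim_row T))"

definition mat_ipow :: "complex mat \<Rightarrow> int \<Rightarrow> complex mat" where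
  "mat_ipow T z = (if 0 \<le> z then T ^\<^sub>m nat z else mat_inv T ^\<^sub>m nat (- z))"

fun msum :: "nat \<Rightarrow> nat \<Rightarrow> (nat \<Rightarrow> complex mat) \<Rightarrow> nat \<Rightarrow> complex mat" where
  "msum r c f 0 = 0\<^sub>m r c"
| "msum r c f (Suc l) = msum r c f l + f l"

definition ttilde :: "complex mat \<Rightarrow> complex mat \<Rightarrow> complex mat \<Rightarrow> nat \<Rightarrow> complex mat" where
  "ttilde T S N l = msum (dim_row S) (dim_col S)
      (\<lambda>i. T ^\<^sub>m i * S * N ^\<^sub>m (l - 1 - i)) l"

end

theory Submission
  imports Defs
begin

lemma adj_eq: "mat_adjoint (A :: complex mat) = mat (dim_col A) (dim_row A) (\<lambda>(i,j). cnj (A $$ (j,i)))"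
  unfolding mat_adjoint_def mat_of_rows_def by (rule eq_matI) simp_all

lemma adj_dims[simp]: "dim_row (mat_adjoint (A :: complex mat)) = dim_col A" "dim_col (mat_adjoint A) = dim_row A"
  unfolding adj_eq by simp_all

lemma adj_index[simp]: "i < dim_col A \<Longrightarrow> j < dim_row A \<Longrightarrow> mat_adjoint (A :: complex mat) $$ (i,j) = cnj (A $$ (j,i))"
  unfolding adj_eq by simp

lemma adj_carrier[simp]: "(A :: complex mat) \<in> carrier_mat n m \<Longrightarrow> mat_adjoint A \<in> carrier_mat m n"
  unfolding carrier_mat_def by simp

lemma adj_adj[simp]: "mat_adjoint (mat_adjoint A) = (A :: complex mat)"
  by (rule eq_matI) simp_all

lemma adj_mult: assumes "(A :: complex mat) \<in> carrier_mat n k" "B \<in> carrier_mat k m"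
  shows "mat_adjoint (A * B) = mat_adjoint B * mat_adjoint A"
  by (rule eq_matI, insert assms, simp_all add: scalar_prod_def cnj_sum mult.commute)

lemma adj_add: assumes "(A :: complex mat) \<in> carrier_mat n m" "B \<in> carrier_mat n m"
  shows "mat_adjoint (A + B) = mat_adjoint A + mat_adjoint B"
  by (rule eq_matI, insert assms, simp_all)

lemma adj_minus: assumes "(A :: complex mat) \<in> carrier_mat n m" "B \<in> carrier_mat n m"
  shows "mat_adjoint (A - B) = mat_adjoint A - mat_adjoint B"
  by (rule eq_matI, insert assms, simp_all)

lemma adj_smult: "mat_adjoint (c \<cdot>\<^sub>m (A :: complex mat)) = cnj c \<cdot>\<^sub>m mat_adjoint A"
  by (rule eq_matI, simp_all)

lemma adj_one[simp]: "mat_adjoint (1\<^sub>m n :: complex mat) = 1\<^sub>m n"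
  by (rule eq_matI, simp_all)

lemma adj_zero[simp]: "mat_adjoint (0\<^sub>m n m :: complex mat) = 0\<^sub>m m n"
  by (rule eq_matI, simp_all)

lemma adj_four_block: assumes "(A :: complex mat) \<in> carrier_mat nr1 nc1" "B \<in> carrier_mat nr1 nc2"
  "C \<in> carrier_mat nr2 nc1" "D \<in> carrier_mat nr2 nc2"
  shows "mat_adjoint (four_block_mat A B C D) =
    four_block_mat (mat_adjoint A) (mat_adjoint C) (mat_adjoint B) (mat_adjoint D)"
  by (rule eq_matI, insert assms, auto)

lemma adj_inj: "mat_adjoint A = mat_adjoint B \<Longrightarrow> A = (B :: complex mat)"
  by (metis adj_adj)

definition outer :: "complex vec \<Rightarrow> complex vec \<Rightarrow> complex mat" where
  "outer u v = mat (dim_vec u) (dim_vec v) (\<lambda>(i,j). u $ i * cnj (v $ j))"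

lemma outer_carrier[simp]: "u \<in> carrier_vec n \<Longrightarrow> v \<in> carrier_vec m \<Longrightarrow> outer u v \<in> carrier_mat n m"
  unfolding outer_def by auto

lemma mult_outer: assumes "M \<in> carrier_mat n n" "u \<in> carrier_vec n" "v \<in> carrier_vec n"
  shows "M * outer u v = outer (M *\<^sub>v u) v"
  by (rule eq_matI, insert assms, auto simp: outer_def scalar_prod_def sum_distrib_right intro!: sum.cong)

lemma outer_mult: assumes "M \<in> carrier_mat n n" "u \<in> carrier_vec n" "v \<in> carrier_vec n"
  shows "outer u v * M = outer u (mat_adjoint M *\<^sub>v v)"
  by (rule eq_matI, insert assms, auto simp: outer_def scalar_prod_def sum_distrib_left intro!: sum.cong)

lemma outer_outer: assumes "u \<in> carrier_vec n" "v \<in> carrier_vec n" "x \<in> carrier_vec n" "y \<in> carrier_vec n"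
  shows "outer u v * outer x y = (x \<bullet>c v) \<cdot>\<^sub>m outer u y"
  by (rule eq_matI, insert assms, auto simp: outer_def scalar_prod_def sum_distrib_left sum_distrib_right mult.assoc mult.left_commute mult.commute)

lemma outer_mult_vec: assumes "u \<in> carrier_vec n" "v \<in> carrier_vec n" "x \<in> carrier_vec n"
  shows "outer u v *\<^sub>v x = (x \<bullet>c v) \<cdot>\<^sub>v u"
  by (rule eq_vecI, insert assms, auto simp: outer_def scalar_prod_def sum_distrib_left mult.assoc mult.left_commute mult.commute)

lemma adj_outer: assumes "u \<in> carrier_vec n" "v \<in> carrier_vec n"
  shows "mat_adjoint (outer u v) = outer v u"
  by (rule eq_matI, insert assms, auto simp: outer_def)

lemma outer_zero2: assumes "u \<in> carrier_vec n"
  shows "outer u (0\<^sub>v m) = 0\<^sub>m n m"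
  by (rule eq_matI, insert assms, auto simp: outer_def)

lemma outer_zero1: assumes "v \<in> carrier_vec m"
  shows "outer (0\<^sub>v n) v = 0\<^sub>m n m"
  by (rule eq_matI, insert assms, auto simp: outer_def)

lemma cscalar_real: "cnj (v \<bullet>c v) = v \<bullet>c (v :: complex vec)"
  by (auto simp: scalar_prod_def mult.commute)

lemma row_moc_Cons: assumes "i < n" "b \<in> carrier_vec n" "set vs \<subseteq> carrier_vec n"
  shows "row (mat_of_cols n (b#vs)) i = vCons (b $ i) (row (mat_of_cols n vs) i)"
proof (rule eq_vecI)
  fix j assume "j < dim_vec (vCons (b $ i) (row (mat_of_cols n vs) i))"
  then show "row (mat_of_cols n (b # vs)) i $ j = vCons (b $ i) (row (mat_of_cols n vs) i) $ j"
    using assms by (cases j) (auto simp: mat_of_cols_Cons_index_0 mat_of_cols_Cons_index_Suc)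
qed auto

lemma moc_Cons_mult: assumes "(b :: complex vec) \<in> carrier_vec n" "set vs \<subseteq> carrier_vec n" "c \<in> carrier_vec (length vs)"
  shows "mat_of_cols n (b # vs) *\<^sub>v vCons a c = a \<cdot>\<^sub>v b + mat_of_cols n vs *\<^sub>v c"
  by (rule eq_vecI, insert assms, auto simp: row_moc_Cons mult.commute)

lemma smult_mat_mult_mat_vec_assoc: "(M :: complex mat) \<in> carrier_mat n m \<Longrightarrow> x \<in> carrier_vec m \<Longrightarrow>
  (c \<cdot>\<^sub>m M) *\<^sub>v x = c \<cdot>\<^sub>v (M *\<^sub>v x)"
  by (rule eq_vecI, auto simp: scalar_prod_def sum_distrib_left ac_simps intro!: sum.cong)

lemma smult_smult_mat: "a \<cdot>\<^sub>m (b \<cdot>\<^sub>m (M :: complex mat)) = (a * b) \<cdot>\<^sub>m M"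
  by (rule eq_matI, auto)

lemma zero_mat_mult_vec[simp]: "(v :: complex vec) \<in> carrier_vec m \<Longrightarrow> 0\<^sub>m n m *\<^sub>v v = 0\<^sub>v n"
  by (rule eq_vecI, auto)

lemma proj_exists:
  assumes "set (vs :: complex vec list) \<subseteq> carrier_vec n"
  shows "\<exists>P \<in> carrier_mat n n. mat_adjoint P = P \<and> P * P = P \<and> (\<forall>v \<in> set vs. P *\<^sub>v v = v)
    \<and> (\<forall>x \<in> carrier_vec n. \<exists>c \<in> carrier_vec (length vs). P *\<^sub>v x = mat_of_cols n vs *\<^sub>v c)"
  using assms
proof (induct vs)
  case Nil
  show ?case
  proof (intro bexI[of _ "0\<^sub>m n n"] conjI ballI)
    fix x :: "complex vec" assume "x \<in> carrier_vec n"
    show "\<exists>c \<in> carrier_vec (length []). 0\<^sub>m n n *\<^sub>v x = mat_of_cols n [] *\<^sub>v c"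
      by (intro bexI[of _ "0\<^sub>v 0"], rule eq_vecI, insert \<open>x \<in> carrier_vec n\<close>, auto)
  qed auto
next
  case (Cons b vs)
  from Cons(2) have b: "b \<in> carrier_vec n" and vs: "set vs \<subseteq> carrier_vec n" by auto
  from Cons(1)[OF vs] obtain P where P: "P \<in> carrier_mat n n" and adjP: "mat_adjoint P = P"
    and PP: "P * P = P" and Pv: "\<forall>v \<in> set vs. P *\<^sub>v v = v"
    and Pr: "\<forall>x \<in> carrier_vec n. \<exists>c \<in> carrier_vec (length vs). P *\<^sub>v x = mat_of_cols n vs *\<^sub>v c" by blast
  define w where "w = b - P *\<^sub>v b"
  have w: "w \<in> carrier_vec n" using b P unfolding w_def by auto
  have bw: "b = w + P *\<^sub>v b" unfolding w_def by (rule eq_vecI, insert b P, auto)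
  obtain cb where cb: "cb \<in> carrier_vec (length vs)" and Pb: "P *\<^sub>v b = mat_of_cols n vs *\<^sub>v cb"
    using Pr b by blast
  show ?case
  proof (cases "w = 0\<^sub>v n")
    case True
    hence Pbb: "P *\<^sub>v b = b" using bw b P by auto
    show ?thesis
    proof (intro bexI[of _ P] conjI ballI)
      fix x :: "complex vec" assume x: "x \<in> carrier_vec n"
      from Pr x obtain c where c: "c \<in> carrier_vec (length vs)" and Px: "P *\<^sub>v x = mat_of_cols n vs *\<^sub>v c" by blast
      show "\<exists>c \<in> carrier_vec (length (b # vs)). P *\<^sub>v x = mat_of_cols n (b # vs) *\<^sub>v c"
        by (intro bexI[of _ "vCons 0 c"], subst moc_Cons_mult[OF b vs c], insert Px b vs c, auto)
    qed (insert P adjP PP Pv Pbb, auto)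
  next
    case False
    define s where "s = w \<bullet>c w"
    have s0: "s \<noteq> 0" unfolding s_def using False w by simp
    have cs: "cnj s = s" unfolding s_def by (rule cscalar_real)
    define Om where "Om = outer w w"
    have Om: "Om \<in> carrier_mat n n" unfolding Om_def using w by simp
    have Pw: "P *\<^sub>v w = 0\<^sub>v n"
    proof -
      have "P *\<^sub>v w = P *\<^sub>v b - P *\<^sub>v (P *\<^sub>v b)" unfolding w_def
        by (rule mult_minus_distrib_mat_vec[OF P b], insert P b, auto)
      also have "P *\<^sub>v (P *\<^sub>v b) = P *\<^sub>v b" 
        using assoc_mult_mat_vec[OF P P b, symmetric] PP by simp
      finally show ?thesis using P b by auto
    qed
    have PO: "P * Om = 0\<^sub>m n n" unfolding Om_def mult_outer[OF P w w] Pw by (rule outer_zero1[OF w])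
    have OP: "Om * P = 0\<^sub>m n n" unfolding Om_def outer_mult[OF P w w] adjP Pw by (rule outer_zero2[OF w])
    have OO: "Om * Om = s \<cdot>\<^sub>m Om" unfolding Om_def outer_outer[OF w w w w] s_def ..
    define c where "c = 1 / s"
    have ccs: "c * c * s = c" unfolding c_def using s0 by (simp add: field_simps)
    have cc: "cnj c = c" unfolding c_def using cs by simp
    define P' where "P' = P + c \<cdot>\<^sub>m Om"
    have P': "P' \<in> carrier_mat n n" unfolding P'_def using P Om by simp
    have adjP': "mat_adjoint P' = P'" unfolding P'_def 
      by (subst adj_add[OF P], insert Om, simp, simp add: adj_smult adjP cc Om_def adj_outer[OF w w])
    have P'P': "P' * P' = P'"
    proof -
      have "P' * P' = P * P + P * (c \<cdot>\<^sub>m Om) + ((c \<cdot>\<^sub>m Om) * P + (c \<cdot>\<^sub>m Om) * (c \<cdot>\<^sub>m Om))"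
      proof -
        have cO: "c \<cdot>\<^sub>m Om \<in> carrier_mat n n" using Om by simp
        show ?thesis unfolding P'_def
          add_mult_distrib_mat[OF P cO add_carrier_mat[OF cO]]
          mult_add_distrib_mat[OF P P cO] mult_add_distrib_mat[OF cO P cO] ..
      qed
      also have "\<dots> = P + (c * c * s) \<cdot>\<^sub>m Om"
        using P Om by (simp add: mult_smult_distrib[of _ n n _ n] mult_smult_assoc_mat[of _ n n _ n] PP PO OP OO smult_smult_mat mult.assoc)
      finally show ?thesis unfolding ccs P'_def .
    qed
    have OPv: "Om *\<^sub>v (P *\<^sub>v v) = 0\<^sub>v n" if "v \<in> carrier_vec n" for v
      using assoc_mult_mat_vec[OF Om P that, symmetric] OP that by simp
    show ?thesis
    proof (intro bexI[of _ P'] conjI ballI)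
      fix v assume v: "v \<in> set (b # vs)"
      show "P' *\<^sub>v v = v"
      proof (cases "v = b")
        case True
        have "Om *\<^sub>v b = Om *\<^sub>v w + Om *\<^sub>v (P *\<^sub>v b)" 
          by (subst bw, rule mult_add_distrib_mat_vec[OF Om w], insert P b, auto)
        also have "Om *\<^sub>v w = s \<cdot>\<^sub>v w" unfolding Om_def outer_mult_vec[OF w w w] s_def ..
        finally have Ob: "Om *\<^sub>v b = s \<cdot>\<^sub>v w" using OPv[OF b] w by simp
        have "P' *\<^sub>v b = P *\<^sub>v b + c \<cdot>\<^sub>v (Om *\<^sub>v b)" unfolding P'_def
          using P Om b by (simp add: add_mult_distrib_mat_vec[of _ n n] smult_mat_mult_mat_vec_assoc)
        also have "\<dots> = b" unfolding Ob w_def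
          by (rule eq_vecI, insert P b s0, auto simp: c_def)
        finally show ?thesis using True by simp
      next
        case False
        with v have v: "v \<in> set vs" by auto
        with vs have vc: "v \<in> carrier_vec n" by auto
        have "P' *\<^sub>v v = P *\<^sub>v v + c \<cdot>\<^sub>v (Om *\<^sub>v (P *\<^sub>v v))" unfolding P'_def
          using P Om vc Pv v by (simp add: add_mult_distrib_mat_vec[of _ n n] smult_mat_mult_mat_vec_assoc)
        also have "\<dots> = v" using OPv[OF vc] Pv v vc by auto
        finally show ?thesis .
      qed
    next
      fix x :: "complex vec" assume x: "x \<in> carrier_vec n"
      from Pr x obtain cx where cx: "cx \<in> carrier_vec (length vs)" and Px: "P *\<^sub>v x = mat_of_cols n vs *\<^sub>v cx" by blast
      define a where "a = c * (x \<bullet>c w)"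
      define B where "B = mat_of_cols n vs"
      have B: "B \<in> carrier_mat n (length vs)" unfolding B_def by auto
      have "P' *\<^sub>v x = P *\<^sub>v x + c \<cdot>\<^sub>v (Om *\<^sub>v x)" unfolding P'_def
        using P Om x by (simp add: add_mult_distrib_mat_vec[of _ n n] smult_mat_mult_mat_vec_assoc)
      also have "\<dots> = B *\<^sub>v cx + a \<cdot>\<^sub>v (b - B *\<^sub>v cb)"
      proof -
        have Ox: "Om *\<^sub>v x = (x \<bullet>c w) \<cdot>\<^sub>v w" unfolding Om_def outer_mult_vec[OF w w x] ..
        show ?thesis unfolding Ox unfolding Px w_def Pb a_def B_def[symmetric]
          by (rule eq_vecI, insert w b x B cb, auto)
      qed
      also have "\<dots> = mat_of_cols n (b # vs) *\<^sub>v vCons a (cx - a \<cdot>\<^sub>v cb)"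
        unfolding moc_Cons_mult[OF b vs minus_carrier_vec[OF cx smult_carrier_vec[THEN iffD2, OF cb]]] B_def[symmetric]
        unfolding mult_minus_distrib_mat_vec[OF B cx smult_carrier_vec[THEN iffD2, OF cb]] mult_mat_vec[OF B cb]
        by (rule eq_vecI, insert w b x B cb cx, auto simp: algebra_simps)
      finally show "\<exists>c \<in> carrier_vec (length (b # vs)). P' *\<^sub>v x = mat_of_cols n (b # vs) *\<^sub>v c"
        using cx cb by (intro bexI[of _ "vCons a (cx - a \<cdot>\<^sub>v cb)"], auto)
    qed (insert P' adjP' P'P', auto)
  qed
qed

lemma sq_mult_carrier[simp]: "A \<in> carrier_mat n n \<Longrightarrow> B \<in> carrier_mat n n \<Longrightarrow> A * B \<in> carrier_mat n n"
  by simp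

lemma mult_unit_vec: "(M :: complex mat) \<in> carrier_mat n m \<Longrightarrow> j < m \<Longrightarrow> M *\<^sub>v unit_vec m j = col M j"
  by (rule eq_vecI, auto)

lemma proj_mat: assumes A: "(A :: complex mat) \<in> carrier_mat n n"
  shows "\<exists>P \<in> carrier_mat n n. mat_adjoint P = P \<and> P * P = P \<and> P * A = A \<and> (\<exists>Z \<in> carrier_mat n n. P = A * Z)"
proof -
  have cA: "set (cols A) \<subseteq> carrier_vec n" using A by (auto simp: cols_def)
  have mA: "mat_of_cols n (cols A) = A" using A mat_of_cols_cols[of A] by simp
  have lA: "length (cols A) = n" using A by simp
  from proj_exists[OF cA, unfolded mA lA] obtain P where P: "P \<in> carrier_mat n n"
    and adjP: "mat_adjoint P = P" and PP: "P * P = P" and Pv: "\<forall>v\<in>set (cols A). P *\<^sub>v v = v"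
    and Pr: "\<forall>x\<in>carrier_vec n. \<exists>c\<in>carrier_vec n. P *\<^sub>v x = A *\<^sub>v c" by blast
  have PA: "P * A = A"
  proof (rule mat_col_eqI)
    fix j assume j: "j < dim_col A"
    have "col A j \<in> set (cols A)" using j by (auto simp: cols_def)
    moreover have "col (P * A) j = P *\<^sub>v col A j" using col_mult2[OF P A] j A by simp
    ultimately show "col (P * A) j = col A j" using Pv by auto
  qed (insert P A, auto)
  define f where "f j = (SOME c. c \<in> carrier_vec n \<and> P *\<^sub>v unit_vec n j = A *\<^sub>v c)" for j
  have f: "f j \<in> carrier_vec n \<and> P *\<^sub>v unit_vec n j = A *\<^sub>v f j" for j
    unfolding f_def by (rule someI_ex, insert Pr, auto)
  define Z where "Z = mat_of_cols n (map f [0..<n])"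
  have Z: "Z \<in> carrier_mat n n" unfolding Z_def by auto
  have "P = A * Z"
  proof (rule mat_col_eqI)
    fix j assume j: "j < dim_col (A * Z)"
    hence j: "j < n" using Z by auto
    have "col Z j = f j" unfolding Z_def using j f by (subst col_mat_of_cols, auto)
    then show "col P j = col (A * Z) j" using f[of j] j A Z P mult_unit_vec[OF P j] by auto
  qed (insert P A Z, auto)
  with P adjP PP PA Z show ?thesis by blast
qed

definition penrose :: "complex mat \<Rightarrow> complex mat \<Rightarrow> bool" where
  "penrose A X \<longleftrightarrow> A * X * A = A \<and> X * A * X = X \<and> mat_adjoint (A * X) = A * X \<and> mat_adjoint (X * A) = X * A"

lemma penrose_exists: assumes A: "(A :: complex mat) \<in> carrier_mat n n"
  shows "\<exists>X \<in> carrier_mat n n. penrose A X"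
proof -
  from proj_mat[OF A] obtain P Z where P: "P \<in> carrier_mat n n" and adjP: "mat_adjoint P = P"
    and PP: "P * P = P" and PA: "P * A = A" and Z: "Z \<in> carrier_mat n n" and PZ: "P = A * Z" by blast
  have A': "mat_adjoint A \<in> carrier_mat n n" using A by simp
  from proj_mat[OF A'] obtain Q W where Q: "Q \<in> carrier_mat n n" and adjQ: "mat_adjoint Q = Q"
    and QQ: "Q * Q = Q" and QA: "Q * mat_adjoint A = mat_adjoint A" and W: "W \<in> carrier_mat n n" 
    and QW: "Q = mat_adjoint A * W" by blast
  have AQ: "A * Q = A"
  proof -
    have "mat_adjoint (Q * mat_adjoint A) = A * Q" using adj_mult[OF Q A'] adjQ by simp
    thus ?thesis using QA by simp
  qed
  have QWA: "Q = mat_adjoint W * A"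
  proof -
    have "mat_adjoint Q = mat_adjoint W * A" unfolding QW using adj_mult[OF A' W] by simp
    thus ?thesis using adjQ by simp
  qed
  define X where "X = Q * Z * P"
  have X: "X \<in> carrier_mat n n" unfolding X_def using Q Z P by auto
  have AX: "A * X = P"
  proof -
    have "A * X = (A * Q) * Z * P" unfolding X_def using A Q Z P by (simp add: assoc_mult_mat[of _ n n _ n _ n])
    also have "\<dots> = P" unfolding AQ PZ[symmetric] PP ..
    finally show ?thesis .
  qed
  have XA: "X * A = Q"
  proof -
    have "X * A = mat_adjoint W * ((A * Z) * (P * A))" unfolding X_def QWA 
      using A Q Z P W by (simp add: assoc_mult_mat[of _ n n _ n _ n])
    also have "\<dots> = Q" unfolding PZ[symmetric] PA unfolding PA QWA ..
    finally show ?thesis .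
  qed
  have "penrose A X" unfolding penrose_def
  proof (intro conjI)
    show "A * X * A = A" unfolding AX PA ..
    have "Q * X = (Q * Q) * (Z * P)" unfolding X_def using Q Z P by (simp add: assoc_mult_mat[of _ n n _ n _ n])
    also have "\<dots> = X" unfolding QQ X_def using Q Z P by (simp add: assoc_mult_mat[of _ n n _ n _ n])
    finally show "X * A * X = X" unfolding XA .
    show "mat_adjoint (A * X) = A * X" unfolding AX adjP ..
    show "mat_adjoint (X * A) = X * A" unfolding XA adjQ ..
  qed
  with X show ?thesis by blast
qed

lemma penrose_unique: assumes A: "(A :: complex mat) \<in> carrier_mat n n"
  and X: "X \<in> carrier_mat n n" and Y: "Y \<in> carrier_mat n n"
  and pX: "penrose A X" and pY: "penrose A Y"
  shows "X = Y"
proof -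
  note ass = assoc_mult_mat[of _ n n _ n _ n]
  note c = A X Y adj_carrier[OF A] adj_carrier[OF X] adj_carrier[OF Y]
  from pX have X1: "A * X * A = A" and X2: "X * A * X = X" and X3: "mat_adjoint (A * X) = A * X"
    and X4: "mat_adjoint (X * A) = X * A" unfolding penrose_def by auto
  from pY have Y1: "A * Y * A = A" and Y2: "Y * A * Y = Y" and Y3: "mat_adjoint (A * Y) = A * Y"
    and Y4: "mat_adjoint (Y * A) = Y * A" unfolding penrose_def by auto
  have AX': "mat_adjoint X * mat_adjoint A = A * X" using X3 adj_mult[OF A X] by simp
  have AY': "mat_adjoint Y * mat_adjoint A = A * Y" using Y3 adj_mult[OF A Y] by simp
  have XA': "mat_adjoint A * mat_adjoint X = X * A" using X4 adj_mult[OF X A] by simp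
  have YA': "mat_adjoint A * mat_adjoint Y = Y * A" using Y4 adj_mult[OF Y A] by simp
  have A'1: "mat_adjoint A = mat_adjoint A * mat_adjoint Y * mat_adjoint A"
  proof -
    have "mat_adjoint A = mat_adjoint (A * Y * A)" using Y1 by simp
    also have "\<dots> = mat_adjoint A * mat_adjoint Y * mat_adjoint A"
      using c by (simp add: adj_mult[of _ n n _ n] ass)
    finally show ?thesis .
  qed
  have A'2: "mat_adjoint A = mat_adjoint A * mat_adjoint X * mat_adjoint A"
  proof -
    have "mat_adjoint A = mat_adjoint (A * X * A)" using X1 by simp
    also have "\<dots> = mat_adjoint A * mat_adjoint X * mat_adjoint A"
      using c by (simp add: adj_mult[of _ n n _ n] ass)
    finally show ?thesis .
  qed
  have "X = X * (A * X)" using X2 c by (simp add: ass)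
  also have "\<dots> = X * (mat_adjoint X * mat_adjoint A)" unfolding AX' ..
  also have "\<dots> = X * (mat_adjoint X * (mat_adjoint A * mat_adjoint Y * mat_adjoint A))" using A'1 by simp
  also have "\<dots> = X * ((mat_adjoint X * mat_adjoint A) * (mat_adjoint Y * mat_adjoint A))" using c by (simp add: ass)
  also have "\<dots> = X * ((A * X) * (A * Y))" unfolding AX' AY' ..
  also have "\<dots> = (X * A * X) * A * Y" using c by (simp add: ass)
  also have "\<dots> = X * A * Y" unfolding X2 ..
  finally have XX: "X = X * A * Y" .
  have "Y = (Y * A) * Y" using Y2 c by (simp add: ass)
  also have "\<dots> = (mat_adjoint A * mat_adjoint Y) * Y" unfolding YA' ..
  also have "\<dots> = ((mat_adjoint A * mat_adjoint X * mat_adjoint A) * mat_adjoint Y) * Y" using A'2 by simp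
  also have "\<dots> = ((mat_adjoint A * mat_adjoint X) * (mat_adjoint A * mat_adjoint Y)) * Y" using c by (simp add: ass)
  also have "\<dots> = ((X * A) * (Y * A)) * Y" unfolding XA' YA' ..
  also have "\<dots> = X * A * (Y * A * Y)" using c by (simp add: ass)
  also have "\<dots> = X * A * Y" unfolding Y2 ..
  finally have YY: "Y = X * A * Y" .
  from XX YY show ?thesis by simp
qed

lemma mp_inverse_eq: assumes A: "(A :: complex mat) \<in> carrier_mat n n"
  and X: "X \<in> carrier_mat n n" and pX: "penrose A X"
  shows "mp_inverse A = X"
  unfolding mp_inverse_def
proof (rule the_equality)
  show "X \<in> carrier_mat (dim_col A) (dim_row A) \<and> A * X * A = A \<and> X * A * X = X \<and>
    mat_adjoint (A * X) = A * X \<and> mat_adjoint (X * A) = X * A" using A X pX unfolding penrose_def by auto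
  fix Y assume "Y \<in> carrier_mat (dim_col A) (dim_row A) \<and> A * Y * A = A \<and> Y * A * Y = Y \<and>
    mat_adjoint (A * Y) = A * Y \<and> mat_adjoint (Y * A) = Y * A"
  then have Y: "Y \<in> carrier_mat n n" and pY: "penrose A Y" using A unfolding penrose_def by auto
  show "Y = X" by (rule penrose_unique[OF A Y X pY pX])
qed

lemma mp_inverse: assumes A: "(A :: complex mat) \<in> carrier_mat n n"
  shows "mp_inverse A \<in> carrier_mat n n" "penrose A (mp_inverse A)"
proof -
  from penrose_exists[OF A] obtain X where X: "X \<in> carrier_mat n n" "penrose A X" by blast
  from mp_inverse_eq[OF A X] X show "mp_inverse A \<in> carrier_mat n n" "penrose A (mp_inverse A)" by auto
qed

lemma proj_props: assumes A: "(A :: complex mat) \<in> carrier_mat n n"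
  shows "proj A \<in> carrier_mat n n" "mat_adjoint (proj A) = proj A" "proj A * proj A = proj A"
    "proj A * A = A" "proj A = A * mp_inverse A"
proof -
  note M = mp_inverse[OF A]
  note ass = assoc_mult_mat[of _ n n _ n _ n]
  from M(2) have 1: "A * mp_inverse A * A = A" and 3: "mat_adjoint (A * mp_inverse A) = A * mp_inverse A"
    unfolding penrose_def by auto
  show "proj A \<in> carrier_mat n n" unfolding proj_def using A M by auto
  show "mat_adjoint (proj A) = proj A" unfolding proj_def by (rule 3)
  show "proj A * A = A" unfolding proj_def by (rule 1)
  show "proj A = A * mp_inverse A" unfolding proj_def ..
  have "A * mp_inverse A * (A * mp_inverse A) = (A * mp_inverse A * A) * mp_inverse A" using A M by (simp add: ass)
  then show "proj A * proj A = proj A" unfolding proj_def 1 .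
qed

lemma pow_mat_add: assumes A: "(A :: complex mat) \<in> carrier_mat n n"
  shows "A ^\<^sub>m (a + b) = A ^\<^sub>m a * A ^\<^sub>m b"
proof (induct b)
  case 0 then show ?case using A by simp
next
  case (Suc b)
  have "A ^\<^sub>m (a + Suc b) = A ^\<^sub>m (a + b) * A" by simp
  also have "\<dots> = A ^\<^sub>m a * (A ^\<^sub>m b * A)" unfolding Suc using A
    by (simp add: assoc_mult_mat[of _ n n _ n _ n])
  finally show ?case by simp
qed

lemma pow_mat_Suc_left: assumes A: "(A :: complex mat) \<in> carrier_mat n n"
  shows "A ^\<^sub>m (Suc k) = A * A ^\<^sub>m k"
  using pow_mat_add[OF A, of 1 k] A by simp

lemma pow_pow_cancel: assumes X: "(X :: complex mat) \<in> carrier_mat t t" and Y: "Y \<in> carrier_mat t t"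
  and XY: "X * Y = 1\<^sub>m t"
  shows "X ^\<^sub>m a * Y ^\<^sub>m b = (if b \<le> a then X ^\<^sub>m (a - b) else Y ^\<^sub>m (b - a))"
proof (induct b)
  case 0 then show ?case using X Y by simp
next
  case (Suc b)
  have "X ^\<^sub>m a * Y ^\<^sub>m Suc b = (X ^\<^sub>m a * Y ^\<^sub>m b) * Y"
    using X Y by (simp add: assoc_mult_mat[of _ t t _ t _ t])
  also have "\<dots> = (if Suc b \<le> a then X ^\<^sub>m (a - Suc b) else Y ^\<^sub>m (Suc b - a))"
  proof (cases "b \<le> a")
    case True
    show ?thesis
    proof (cases "b = a")
      case True
      then show ?thesis using Suc Y X by simp
    next
      case False
      with True obtain d where d: "a - b = Suc d" "a - Suc b = d" by (cases "a - b", auto)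
      have "X ^\<^sub>m (a - b) * Y = X ^\<^sub>m d * (X * Y)" unfolding d using X Y
        by (simp add: assoc_mult_mat[of _ t t _ t _ t])
      then show ?thesis using Suc True False d XY X by simp
    qed
  next
    case False
    then have "Suc b - a = Suc (b - a)" by auto
    then show ?thesis using Suc False by simp
  qed
  finally show ?case .
qed

lemma pow_pow_same: assumes X: "(X :: complex mat) \<in> carrier_mat t t" and Y: "Y \<in> carrier_mat t t"
  and XY: "X * Y = 1\<^sub>m t"
  shows "X ^\<^sub>m a * Y ^\<^sub>m a = 1\<^sub>m t"
  using pow_pow_cancel[OF X Y XY, of a a] X by simp

lemma inv_props: assumes T: "(T :: complex mat) \<in> carrier_mat t t" and inv: "invertible_mat T"
  shows "mat_inv T \<in> carrier_mat t t" "T * mat_inv T = 1\<^sub>m t" "mat_inv T * T = 1\<^sub>m t"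
proof -
  from inv obtain B where TB: "T * B = 1\<^sub>m t" and BT: "B * T = 1\<^sub>m (dim_row B)"
    unfolding invertible_mat_def inverts_mat_def using T by auto
  have B: "B \<in> carrier_mat t t"
  proof -
    have "dim_col B = t" using arg_cong[OF TB, of dim_col] by simp
    moreover have "dim_row B = t" using arg_cong[OF BT, of dim_col] T by simp
    ultimately show ?thesis by auto
  qed
  have BT': "B * T = 1\<^sub>m t" using BT B by auto
  have "mat_inv T = B" unfolding mat_inv_def
  proof (rule the_equality)
    show "B \<in> carrier_mat (dim_row T) (dim_row T) \<and> T * B = 1\<^sub>m (dim_row T) \<and> B * T = 1\<^sub>m (dim_row T)"
      using B TB BT' T by auto
    fix B' assume "B' \<in> carrier_mat (dim_row T) (dim_row T) \<and> T * B' = 1\<^sub>m (dim_row T) \<and> B' * T = 1\<^sub>m (dim_row T)"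
    then have B': "B' \<in> carrier_mat t t" and TB': "T * B' = 1\<^sub>m t" and B'T: "B' * T = 1\<^sub>m t" using T by auto
    have "B' = B' * (T * B)" using TB B' by simp
    also have "\<dots> = (B' * T) * B" using B' T B by (simp add: assoc_mult_mat[of _ t t _ t _ t])
    also have "\<dots> = B" using B'T B by simp
    finally show "B' = B" .
  qed
  then show "mat_inv T \<in> carrier_mat t t" "T * mat_inv T = 1\<^sub>m t" "mat_inv T * T = 1\<^sub>m t"
    using B TB BT' by auto
qed

lemma inv_pow_eq_iff: assumes T: "(T :: complex mat) \<in> carrier_mat t t" and Ti: "Ti \<in> carrier_mat t t"
  and TTi: "T * Ti = 1\<^sub>m t" and TiT: "Ti * T = 1\<^sub>m t"
  and X: "X \<in> carrier_mat t r" and Y: "Y \<in> carrier_mat t r"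
  shows "Ti ^\<^sub>m a * X = Y \<longleftrightarrow> X = T ^\<^sub>m a * Y"
proof
  assume "Ti ^\<^sub>m a * X = Y"
  then have "T ^\<^sub>m a * Y = (T ^\<^sub>m a * Ti ^\<^sub>m a) * X" using T Ti X by (simp add: assoc_mult_mat[of _ t t _ t _ r])
  then show "X = T ^\<^sub>m a * Y" unfolding pow_pow_same[OF T Ti TTi] using X by simp
next
  assume "X = T ^\<^sub>m a * Y"
  then have "Ti ^\<^sub>m a * X = (Ti ^\<^sub>m a * T ^\<^sub>m a) * Y" using T Ti Y by (simp add: assoc_mult_mat[of _ t t _ t _ r])
  then show "Ti ^\<^sub>m a * X = Y" unfolding pow_pow_same[OF Ti T TiT] using Y by simp
qed

lemma range_mult: assumes X: "(X :: complex mat) \<in> carrier_mat n n" and Y: "Y \<in> carrier_mat n n"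
  and W: "W \<in> carrier_mat n n" and XYW: "X = Y * W"
  shows "mat_range X \<subseteq> mat_range Y"
proof
  fix v assume "v \<in> mat_range X"
  then obtain x where x: "x \<in> carrier_vec n" and v: "v = X *\<^sub>v x" unfolding mat_range_def using X by auto
  have "v = Y *\<^sub>v (W *\<^sub>v x)" unfolding v XYW using Y W x by simp
  then show "v \<in> mat_range Y" unfolding mat_range_def using Y W x by auto
qed

lemma range_sub: assumes X: "(X :: complex mat) \<in> carrier_mat n n" and Y: "Y \<in> carrier_mat n n"
  and sub: "mat_range X \<subseteq> mat_range Y"
  shows "\<exists>W \<in> carrier_mat n n. X = Y * W"
proof -
  have ex: "\<exists>c. c \<in> carrier_vec n \<and> X *\<^sub>v unit_vec n j = Y *\<^sub>v c" for j
  proof -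
    have "X *\<^sub>v unit_vec n j \<in> mat_range X" unfolding mat_range_def using X by auto
    with sub show ?thesis unfolding mat_range_def using Y by auto
  qed
  define f where "f j = (SOME c. c \<in> carrier_vec n \<and> X *\<^sub>v unit_vec n j = Y *\<^sub>v c)" for j
  have f: "f j \<in> carrier_vec n \<and> X *\<^sub>v unit_vec n j = Y *\<^sub>v f j" for j
    unfolding f_def by (rule someI_ex, rule ex)
  define W where "W = mat_of_cols n (map f [0..<n])"
  have W: "W \<in> carrier_mat n n" unfolding W_def by auto
  have "X = Y * W"
  proof (rule mat_col_eqI)
    fix j assume j: "j < dim_col (Y * W)"
    hence j: "j < n" using W by auto
    have "col W j = f j" unfolding W_def using j f by (subst col_mat_of_cols, auto)
    then show "col X j = col (Y * W) j" using f[of j] j Y W X mult_unit_vec[OF X j] by auto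
  qed (insert X Y W, auto)
  with W show ?thesis by blast
qed

section \<open>Uniqueness of core-EP and Drazin inverses\<close>

lemma core_ep_eq: assumes A: "(A :: complex mat) \<in> carrier_mat n n" and X: "X \<in> carrier_mat n n"
  and XAX: "X * A * X = X" and R1: "mat_range X = mat_range (A ^\<^sub>m mat_index A)"
  and R2: "mat_range (mat_adjoint X) = mat_range (A ^\<^sub>m mat_index A)"
  shows "core_ep A = X"
  unfolding core_ep_def
proof (rule the_equality)
  show "X \<in> carrier_mat (dim_row A) (dim_row A) \<and> X * A * X = X \<and> mat_range X = mat_range (A ^\<^sub>m mat_index A) \<and>
    mat_range (mat_adjoint X) = mat_range (A ^\<^sub>m mat_index A)" using X A XAX R1 R2 by auto
  fix Y assume "Y \<in> carrier_mat (dim_row A) (dim_row A) \<and> Y * A * Y = Y \<and> mat_range Y = mat_range (A ^\<^sub>m mat_index A) \<and>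
    mat_range (mat_adjoint Y) = mat_range (A ^\<^sub>m mat_index A)"
  then have Y: "Y \<in> carrier_mat n n" and YAY: "Y * A * Y = Y" and S1: "mat_range Y = mat_range X"
    and S2: "mat_range (mat_adjoint Y) = mat_range (mat_adjoint X)" using A R1 R2 by auto
  note ass = assoc_mult_mat[of _ n n _ n _ n]
  from range_sub[OF X Y] S1 obtain W where W: "W \<in> carrier_mat n n" and XW: "X = Y * W" by auto
  from range_sub[OF adj_carrier[OF Y] adj_carrier[OF X]] S2 obtain V where V: "V \<in> carrier_mat n n"
    and YV: "mat_adjoint Y = mat_adjoint X * V" by auto
  have YV': "Y = mat_adjoint V * X"
  proof -
    have "Y = mat_adjoint (mat_adjoint X * V)" unfolding YV[symmetric] by simp
    also have "\<dots> = mat_adjoint V * X" using adj_mult[OF adj_carrier[OF X] V] by simp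
    finally show ?thesis .
  qed
  have "Y * A * X = (Y * A * Y) * W" unfolding XW using Y A W by (simp add: ass)
  also have "\<dots> = X" unfolding YAY XW ..
  finally have 1: "Y * A * X = X" .
  have "Y * A * X = mat_adjoint V * (X * A * X)" unfolding YV' using V X A by (simp add: ass)
  also have "\<dots> = Y" unfolding XAX YV' ..
  finally have 2: "Y * A * X = Y" .
  from 1 2 show "Y = X" by simp
qed

lemma drazin_eq: assumes A: "(A :: complex mat) \<in> carrier_mat n n" and X: "X \<in> carrier_mat n n"
  and XAX: "X * A * X = X" and AX: "A * X = X * A"
  and XA: "X * A ^\<^sub>m (Suc (mat_index A)) = A ^\<^sub>m (mat_index A)"
  shows "drazin A = X"
  unfolding drazin_def
proof (rule the_equality)
  show "X \<in> carrier_mat (dim_row A) (dim_row A) \<and> X * A * X = X \<and> A * X = X * A \<and>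
    X * A ^\<^sub>m (Suc (mat_index A)) = A ^\<^sub>m (mat_index A)" using X A XAX AX XA by auto
  fix Y assume "Y \<in> carrier_mat (dim_row A) (dim_row A) \<and> Y * A * Y = Y \<and> A * Y = Y * A \<and>
    Y * A ^\<^sub>m (Suc (mat_index A)) = A ^\<^sub>m (mat_index A)"
  then have Y: "Y \<in> carrier_mat n n" and YAY: "Y * A * Y = Y" and AY: "A * Y = Y * A"
    and YA: "Y * A ^\<^sub>m (Suc (mat_index A)) = A ^\<^sub>m (mat_index A)" using A by auto
  define k where "k = mat_index A"
  note ass = assoc_mult_mat[of _ n n _ n _ n]
  have comm: "A ^\<^sub>m j * Y = Y * A ^\<^sub>m j" for j
  proof (induct j)
    case 0 then show ?case using Y A by simp
  next
    case (Suc j)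
    have "A ^\<^sub>m Suc j * Y = A ^\<^sub>m j * (A * Y)" using A Y by (simp add: ass)
    also have "\<dots> = (A ^\<^sub>m j * Y) * A" unfolding AY using A Y by (simp add: ass)
    also have "\<dots> = Y * A ^\<^sub>m Suc j" unfolding Suc using A Y by (simp add: ass)
    finally show ?case .
  qed
  have p2: "X = X ^\<^sub>m (Suc j) * A ^\<^sub>m j" for j
  proof (induct j)
    case 0 then show ?case using X A by simp
  next
    case (Suc j)
    have "X ^\<^sub>m Suc (Suc j) * A ^\<^sub>m Suc j = X * (X ^\<^sub>m Suc j * A ^\<^sub>m j) * A"
      unfolding pow_mat_Suc_left[OF X, of "Suc j"] using X A by (simp add: ass)
    also have "\<dots> = X * (A * X)" unfolding Suc[symmetric] AX using X A by (simp add: ass)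
    also have "\<dots> = X" using XAX X A by (simp add: ass)
    finally show ?case by simp
  qed
  have p2': "Y = A ^\<^sub>m j * Y ^\<^sub>m (Suc j)" for j
  proof (induct j)
    case 0 then show ?case using Y A by simp
  next
    case (Suc j)
    have "A ^\<^sub>m Suc j * Y ^\<^sub>m Suc (Suc j) = A * (A ^\<^sub>m j * Y ^\<^sub>m Suc j) * Y"
      unfolding pow_mat_Suc_left[OF A, of j] using Y A by (simp add: ass)
    also have "\<dots> = Y * A * Y" unfolding Suc[symmetric] AY ..
    also have "\<dots> = Y" by (rule YAY)
    finally show ?case by simp
  qed
  have "X = X ^\<^sub>m (Suc k) * (Y * A ^\<^sub>m (Suc k))" using p2[of k] YA unfolding k_def by simp
  also have "\<dots> = (X ^\<^sub>m (Suc k) * A ^\<^sub>m k) * A * Y" unfolding comm[symmetric] using X A Y by (simp add: ass)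
  also have "\<dots> = X * A * Y" unfolding p2[symmetric] ..
  finally have 1: "X = X * A * Y" .
  have "Y = (X * A ^\<^sub>m (Suc k)) * Y ^\<^sub>m (Suc k)" using p2'[of k] XA unfolding k_def by simp
  also have "\<dots> = X * A * (A ^\<^sub>m k * Y ^\<^sub>m (Suc k))" unfolding pow_mat_Suc_left[OF A] using X A Y by (simp add: ass)
  also have "\<dots> = X * A * Y" unfolding p2'[symmetric] ..
  finally have 2: "Y = X * A * Y" .
  from 1 2 show "Y = X" by simp
qed

section \<open>Unitary conjugation\<close>

locale unit_conj =
  fixes U :: "complex mat" and n :: nat
  assumes U: "U \<in> carrier_mat n n" and UhU: "mat_adjoint U * U = 1\<^sub>m n"
begin

abbreviation "Uh \<equiv> mat_adjoint U"

lemma Uh: "Uh \<in> carrier_mat n n" using U by simp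

lemma UUh: "U * Uh = 1\<^sub>m n" using mat_mult_left_right_inverse[OF Uh U UhU] .

definition cj :: "complex mat \<Rightarrow> complex mat" where "cj X = U * X * Uh"

lemma cj_carrier[simp]: "X \<in> carrier_mat n n \<Longrightarrow> cj X \<in> carrier_mat n n"
  unfolding cj_def using U Uh by simp

lemma cj_mult: assumes X: "X \<in> carrier_mat n n" and Y: "Y \<in> carrier_mat n n"
  shows "cj X * cj Y = cj (X * Y)"
proof -
  note ass = assoc_mult_mat[of _ n n _ n _ n]
  have "cj X * cj Y = U * (X * ((Uh * U) * (Y * Uh)))" unfolding cj_def using U Uh X Y by (simp add: ass)
  also have "\<dots> = cj (X * Y)" unfolding cj_def UhU using U Uh X Y by (simp add: ass)
  finally show ?thesis .
qed

lemma cj_inj: assumes X: "X \<in> carrier_mat n n" and Y: "Y \<in> carrier_mat n n" and eq: "cj X = cj Y"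
  shows "X = Y"
proof -
  note ass = assoc_mult_mat[of _ n n _ n _ n]
  have bk: "Uh * cj Z * U = Z" if hZ: "Z \<in> carrier_mat n n" for Z
  proof -
    have "Uh * cj Z * U = (Uh * U) * (Z * (Uh * U))" unfolding cj_def using U Uh hZ by (simp add: ass)
    also have "\<dots> = Z" unfolding UhU using hZ by simp
    finally show ?thesis .
  qed
  have "X = Uh * cj X * U" using bk[OF X] by simp
  also have "\<dots> = Uh * cj Y * U" unfolding eq ..
  also have "\<dots> = Y" using bk[OF Y] .
  finally show ?thesis .
qed

lemma cj_inj_iff: "X \<in> carrier_mat n n \<Longrightarrow> Y \<in> carrier_mat n n \<Longrightarrow> cj X = cj Y \<longleftrightarrow> X = Y"
  using cj_inj by blast

lemma cj_adj: assumes X: "X \<in> carrier_mat n n" shows "mat_adjoint (cj X) = cj (mat_adjoint X)"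
  unfolding cj_def using adj_mult[OF mult_carrier_mat[OF U X] Uh] adj_mult[OF U X] U X Uh
  by (simp add: assoc_mult_mat[of _ n n _ n _ n])

lemma cj_one: "cj (1\<^sub>m n) = 1\<^sub>m n" unfolding cj_def using U Uh UUh by simp

lemma cj_pow: assumes X: "X \<in> carrier_mat n n" shows "cj X ^\<^sub>m j = cj (X ^\<^sub>m j)"
proof (induct j)
  case 0 then show ?case using cj_one carrier_matD[OF cj_carrier[OF X]] X by simp
next
  case (Suc j) then show ?case using cj_mult[OF pow_carrier_mat[OF X] X] by simp
qed

lemma cj_penrose: assumes X: "X \<in> carrier_mat n n" and Y: "Y \<in> carrier_mat n n" and p: "penrose X Y"
  shows "penrose (cj X) (cj Y)"
  using p unfolding penrose_def
  by (simp add: cj_mult X Y cj_adj)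

lemma cj_mp: assumes X: "X \<in> carrier_mat n n" shows "mp_inverse (cj X) = cj (mp_inverse X)"
  by (rule mp_inverse_eq[OF cj_carrier[OF X] cj_carrier[OF mp_inverse(1)[OF X]]],
      rule cj_penrose[OF X mp_inverse(1)[OF X] mp_inverse(2)[OF X]])

lemma cj_proj: assumes X: "X \<in> carrier_mat n n" shows "proj (cj X) = cj (proj X)"
  unfolding proj_def cj_mp[OF X] cj_mult[OF X mp_inverse(1)[OF X]] ..

end

section \<open>Block matrices\<close>

lemma fb_mult: assumes T1: "T1 \<in> carrier_mat t t" and T2: "T2 \<in> carrier_mat t t" and R1: "R1 \<in> carrier_mat t r"
  and R2: "R2 \<in> carrier_mat t r" and L1: "L1 \<in> carrier_mat r r" and L2: "L2 \<in> carrier_mat r r"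
  shows "four_block_mat T1 R1 (0\<^sub>m r t) L1 * four_block_mat T2 R2 (0\<^sub>m r t) (L2 :: complex mat) =
    four_block_mat (T1 * T2) (T1 * R2 + R1 * L2) (0\<^sub>m r t) (L1 * L2)"
  by (subst mult_four_block_mat[OF T1 R1 zero_carrier_mat L1 T2 R2 zero_carrier_mat L2], insert assms, auto)

lemma fb_adj: assumes T1: "(T1 :: complex mat) \<in> carrier_mat t t" and R1: "R1 \<in> carrier_mat t r" and L1: "L1 \<in> carrier_mat r r"
  shows "mat_adjoint (four_block_mat T1 R1 (0\<^sub>m r t) L1) = 
    four_block_mat (mat_adjoint T1) (0\<^sub>m t r) (mat_adjoint R1) (mat_adjoint L1)"
  by (subst adj_four_block[OF T1 R1 zero_carrier_mat L1], simp)

lemma fb_inj: assumes "A \<in> carrier_mat nr1 nc1" "A' \<in> carrier_mat nr1 nc1"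
  "B \<in> carrier_mat nr1 nc2" "B' \<in> carrier_mat nr1 nc2"
  "C \<in> carrier_mat nr2 nc1" "C' \<in> carrier_mat nr2 nc1"
  "D \<in> carrier_mat nr2 nc2" "D' \<in> carrier_mat nr2 nc2"
  and eq: "four_block_mat A B C D = four_block_mat A' B' C' (D' :: complex mat)"
  shows "A = A' \<and> B = B' \<and> C = C' \<and> D = D'"
proof (intro conjI)
  let ?F = "four_block_mat A B C D" and ?F' = "four_block_mat A' B' C' D'"
  have e: "?F $$ (i,j) = ?F' $$ (i,j)" for i j using eq by simp
  show "A = A'"
  proof (rule eq_matI)
    fix i j assume "i < dim_row A'" "j < dim_col A'"
    then show "A $$ (i,j) = A' $$ (i,j)" using e[of i j] assms(1-8) by auto
  qed (insert assms, auto)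
  show "B = B'"
  proof (rule eq_matI)
    fix i j assume "i < dim_row B'" "j < dim_col B'"
    then show "B $$ (i,j) = B' $$ (i,j)" using e[of i "j + nc1"] assms(1-8) by auto
  qed (insert assms, auto)
  show "C = C'"
  proof (rule eq_matI)
    fix i j assume "i < dim_row C'" "j < dim_col C'"
    then show "C $$ (i,j) = C' $$ (i,j)" using e[of "i + nr1" j] assms(1-8) by auto
  qed (insert assms, auto)
  show "D = D'"
  proof (rule eq_matI)
    fix i j assume "i < dim_row D'" "j < dim_col D'"
    then show "D $$ (i,j) = D' $$ (i,j)" using e[of "i + nr1" "j + nc1"] assms(1-8) by auto
  qed (insert assms, auto)
qed

lemma msum_carrier: "(\<And>i. i < l \<Longrightarrow> f i \<in> carrier_mat r c) \<Longrightarrow> msum r c f l \<in> carrier_mat r c"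
  by (induct l, auto)

lemma msum_cong: "(\<And>i. i < l \<Longrightarrow> f i = g i) \<Longrightarrow> msum r c f l = msum r c g l"
  by (induct l, auto)

lemma msum_mult_right: assumes f: "\<And>i. i < l \<Longrightarrow> f i \<in> carrier_mat r c" and N: "(N :: complex mat) \<in> carrier_mat c c'"
  shows "msum r c f l * N = msum r c' (\<lambda>i. f i * N) l"
  using f
proof (induct l)
  case 0 then show ?case using N by simp
next
  case (Suc l)
  have "msum r c f (Suc l) * N = msum r c f l * N + f l * N"
    by (simp, rule add_mult_distrib_mat[OF msum_carrier _ N], insert Suc, auto)
  then show ?case using Suc by simp
qed

lemma tt_carrier: assumes T: "T \<in> carrier_mat t t" and S: "S \<in> carrier_mat t r" and N: "N \<in> carrier_mat r r"
  shows "ttilde T S N l \<in> carrier_mat t r"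
proof -
  have dS: "dim_row S = t" "dim_col S = r" using S by auto
  show ?thesis unfolding ttilde_def dS by (intro msum_carrier, insert T S N, auto)
qed

lemma tt_0: assumes S: "S \<in> carrier_mat t r" shows "ttilde T S N 0 = 0\<^sub>m t r"
  unfolding ttilde_def using S by simp

lemma tt_Suc: assumes T: "T \<in> carrier_mat t t" and S: "S \<in> carrier_mat t r" and N: "(N :: complex mat) \<in> carrier_mat r r"
  shows "ttilde T S N (Suc l) = T ^\<^sub>m l * S + ttilde T S N l * N"
proof -
  have dS: "dim_row S = t" "dim_col S = r" using S by auto
  have "ttilde T S N (Suc l) = msum t r (\<lambda>i. T ^\<^sub>m i * S * N ^\<^sub>m (l - i)) l + T ^\<^sub>m l * S * N ^\<^sub>m 0"
    unfolding ttilde_def dS by simp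
  also have "msum t r (\<lambda>i. T ^\<^sub>m i * S * N ^\<^sub>m (l - i)) l = msum t r (\<lambda>i. T ^\<^sub>m i * S * N ^\<^sub>m (l - 1 - i) * N) l"
  proof (rule msum_cong)
    fix i assume i: "i < l"
    then have li: "l - i = Suc (l - 1 - i)" by auto
    have TS: "T ^\<^sub>m i * S \<in> carrier_mat t r" using mult_carrier_mat[OF pow_carrier_mat[OF T] S] .
    show "T ^\<^sub>m i * S * N ^\<^sub>m (l - i) = T ^\<^sub>m i * S * N ^\<^sub>m (l - 1 - i) * N"
      unfolding li pow_mat.simps by (rule assoc_mult_mat[OF TS pow_carrier_mat[OF N] N, symmetric])
  qed
  also have "\<dots> = ttilde T S N l * N" unfolding ttilde_def dS
    by (rule msum_mult_right[symmetric], insert T S N, auto)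
  finally show ?thesis using comm_add_mat[OF mult_carrier_mat[OF tt_carrier[OF T S N] N] mult_carrier_mat[OF pow_carrier_mat[OF T] S]] T S N
    by simp
qed

lemma tt_comm: assumes T: "T \<in> carrier_mat t t" and S: "S \<in> carrier_mat t r" and N: "(N :: complex mat) \<in> carrier_mat r r"
  shows "T * ttilde T S N l + S * N ^\<^sub>m l = ttilde T S N (Suc l)"
proof (induct l)
  case 0 then show ?case unfolding tt_Suc[OF T S N] tt_0[OF S] using T S N by simp
next
  case (Suc l)
  note tt = tt_carrier[OF T S N]
  have TlS: "T ^\<^sub>m l * S \<in> carrier_mat t r" using mult_carrier_mat[OF pow_carrier_mat[OF T] S] .
  have TSlS: "T ^\<^sub>m Suc l * S \<in> carrier_mat t r" using mult_carrier_mat[OF pow_carrier_mat[OF T] S] .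
  have ttN: "ttilde T S N l * N \<in> carrier_mat t r" using mult_carrier_mat[OF tt[of l] N] .
  have TttN: "T * ttilde T S N l * N \<in> carrier_mat t r" using mult_carrier_mat[OF mult_carrier_mat[OF T tt[of l]] N] .
  have SNN: "S * N ^\<^sub>m l * N \<in> carrier_mat t r" using mult_carrier_mat[OF mult_carrier_mat[OF S pow_carrier_mat[OF N]] N] .
  have 1: "T * ttilde T S N (Suc l) = T ^\<^sub>m (Suc l) * S + (T * ttilde T S N l) * N"
  proof -
    have "T * ttilde T S N (Suc l) = T * (T ^\<^sub>m l * S) + T * (ttilde T S N l * N)"
      unfolding tt_Suc[OF T S N, of l] by (rule mult_add_distrib_mat[OF T TlS ttN])
    also have "T * (T ^\<^sub>m l * S) = T ^\<^sub>m (Suc l) * S" unfolding pow_mat_Suc_left[OF T] 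
      using T S by (simp add: assoc_mult_mat[of _ t t _ t _ r])
    also have "T * (ttilde T S N l * N) = (T * ttilde T S N l) * N"
      using T tt[of l] N by (simp add: assoc_mult_mat[of _ t t _ r _ r])
    finally show ?thesis .
  qed
  have 2: "S * N ^\<^sub>m Suc l = (S * N ^\<^sub>m l) * N" using S N by (simp add: assoc_mult_mat[of _ t r _ r _ r])
  have "T * ttilde T S N (Suc l) + S * N ^\<^sub>m Suc l = T ^\<^sub>m (Suc l) * S + ((T * ttilde T S N l) * N + (S * N ^\<^sub>m l) * N)"
    unfolding 1 2 by (rule assoc_add_mat[OF TSlS TttN SNN])
  also have "(T * ttilde T S N l) * N + (S * N ^\<^sub>m l) * N = (T * ttilde T S N l + S * N ^\<^sub>m l) * N"
    by (rule add_mult_distrib_mat[OF mult_carrier_mat[OF T tt[of l]] mult_carrier_mat[OF S pow_carrier_mat[OF N]] N, symmetric])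
  also have "T ^\<^sub>m (Suc l) * S + \<dots> = ttilde T S N (Suc (Suc l))" unfolding Suc tt_Suc[OF T S N, of "Suc l"] ..
  finally show ?case .
qed

abbreviation hb :: "nat \<Rightarrow> nat \<Rightarrow> complex mat \<Rightarrow> complex mat \<Rightarrow> complex mat" where
  "hb t r V W \<equiv> four_block_mat V W (0\<^sub>m r t) (0\<^sub>m r r)"

lemma hb_carrier: "V \<in> carrier_mat t t \<Longrightarrow> hb t r V W \<in> carrier_mat (t + r) (t + r)"
  by simp

lemma hb_mult: assumes V1: "V1 \<in> carrier_mat t t" and V2: "V2 \<in> carrier_mat t t"
  and W1: "W1 \<in> carrier_mat t r" and W2: "W2 \<in> carrier_mat t r"
  shows "hb t r V1 W1 * hb t r V2 W2 = hb t r (V1 * V2) (V1 * W2)"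
  using fb_mult[OF V1 V2 W1 W2 zero_carrier_mat zero_carrier_mat] V1 V2 W1 W2 by simp

lemma hb_mult_fb: assumes V: "V \<in> carrier_mat t t" and T: "T \<in> carrier_mat t t"
  and W: "W \<in> carrier_mat t r" and R: "R \<in> carrier_mat t r" and L: "L \<in> carrier_mat r r"
  shows "hb t r V W * four_block_mat T R (0\<^sub>m r t) L = hb t r (V * T) (V * R + W * L)"
  using fb_mult[OF V T W R zero_carrier_mat L] V T W R L by simp

lemma fb_mult_hb: assumes V: "V \<in> carrier_mat t t" and T: "T \<in> carrier_mat t t"
  and W: "W \<in> carrier_mat t r" and R: "R \<in> carrier_mat t r" and L: "L \<in> carrier_mat r r"
  shows "four_block_mat T R (0\<^sub>m r t) L * hb t r V W = hb t r (T * V) (T * W)"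
  using fb_mult[OF T V R W L zero_carrier_mat] V T W R L by simp

lemma hb_adj: assumes V: "V \<in> carrier_mat t t" and W: "W \<in> carrier_mat t r"
  shows "mat_adjoint (hb t r V W) = four_block_mat (mat_adjoint V) (0\<^sub>m t r) (mat_adjoint W) (0\<^sub>m r r)"
  using fb_adj[OF V W zero_carrier_mat[of r r]] by simp

lemma hb_inj: assumes "V \<in> carrier_mat t t" "V' \<in> carrier_mat t t" "W \<in> carrier_mat t r" "W' \<in> carrier_mat t r"
  shows "hb t r V W = hb t r V' W' \<longleftrightarrow> V = V' \<and> W = W'"
  using fb_inj[OF assms(1,2) assms(3,4) zero_carrier_mat zero_carrier_mat zero_carrier_mat zero_carrier_mat] by auto

lemma blockG: assumes V: "V \<in> carrier_mat t t" and W: "W \<in> carrier_mat t r"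
  and T: "T \<in> carrier_mat t t" and Ti: "Ti \<in> carrier_mat t t" and TTi: "T * Ti = 1\<^sub>m t"
  and R: "R \<in> carrier_mat t r" and L: "L \<in> carrier_mat r r"
  shows "hb t r V W * proj (four_block_mat T R (0\<^sub>m r t) L) = hb t r V (W * proj L)"
proof -
  define n where "n = t + r"
  define M where "M = four_block_mat T R (0\<^sub>m r t) L"
  have M: "M \<in> carrier_mat n n" unfolding M_def n_def using T L by simp
  note PM = proj_props[OF M] mp_inverse(1)[OF M]
  define P where "P = proj M"
  define Mp where "Mp = mp_inverse M"
  have P: "P \<in> carrier_mat n n" and adjP: "mat_adjoint P = P" and PMM: "P * M = M" and PMp: "P = M * Mp"
    and Mp: "Mp \<in> carrier_mat n n" using PM unfolding P_def Mp_def by auto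
  note PL = proj_props[OF L] mp_inverse(1)[OF L]
  define Q where "Q = proj L"
  define Lp where "Lp = mp_inverse L"
  have Q: "Q \<in> carrier_mat r r" and QLL: "Q * L = L" and QLp: "Q = L * Lp" and adjQ: "mat_adjoint Q = Q"
    and Lp: "Lp \<in> carrier_mat r r" using PL unfolding Q_def Lp_def by auto
  have WQ: "W * Q \<in> carrier_mat t r" using W Q by simp
  define X where "X = hb t r V W"
  define Y where "Y = hb t r V (W * Q)"
  have X: "X \<in> carrier_mat n n" unfolding X_def n_def using V by simp
  have Y: "Y \<in> carrier_mat n n" unfolding Y_def n_def using V by simp
  have XM: "X * M = Y * M" unfolding X_def Y_def M_def
    unfolding hb_mult_fb[OF V T W R L] hb_mult_fb[OF V T WQ R L]
    using W Q L QLL by (simp add: assoc_mult_mat[of _ t r _ r _ r])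
  have XP: "X * P = Y * P"
  proof -
    have "X * P = (X * M) * Mp" unfolding PMp using X M Mp by (simp add: assoc_mult_mat[of _ n n _ n _ n])
    also have "\<dots> = Y * P" unfolding XM PMp using Y M Mp by (simp add: assoc_mult_mat[of _ n n _ n _ n])
    finally show ?thesis .
  qed
  define G12 where "G12 = W * mat_adjoint Lp"
  define G11 where "G11 = (V - G12 * mat_adjoint R) * mat_adjoint Ti"
  have G12: "G12 \<in> carrier_mat t r" unfolding G12_def using W Lp by simp
  have G12R: "G12 * mat_adjoint R \<in> carrier_mat t t" using mult_carrier_mat[OF G12 adj_carrier[OF R]] .
  have VG: "V - G12 * mat_adjoint R \<in> carrier_mat t t" using minus_carrier_mat[OF G12R] .
  have G11: "G11 \<in> carrier_mat t t" unfolding G11_def using mult_carrier_mat[OF VG adj_carrier[OF Ti]] .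
  define G where "G = hb t r G11 G12"
  have G: "G \<in> carrier_mat n n" unfolding G_def n_def using G11 by simp
  have adjM: "mat_adjoint M = four_block_mat (mat_adjoint T) (0\<^sub>m t r) (mat_adjoint R) (mat_adjoint L)"
    unfolding M_def by (rule fb_adj[OF T R L])
  have GM: "G * mat_adjoint M = Y"
  proof -
    have "G * mat_adjoint M = four_block_mat (G11 * mat_adjoint T + G12 * mat_adjoint R) (G12 * mat_adjoint L)
       (0\<^sub>m r t) (0\<^sub>m r r)"
      unfolding G_def adjM
      by (subst mult_four_block_mat[OF G11 G12 zero_carrier_mat zero_carrier_mat adj_carrier[OF T]
          zero_carrier_mat adj_carrier[OF R] adj_carrier[OF L]], insert G11 G12 T R L, simp)
    also have "G11 * mat_adjoint T + G12 * mat_adjoint R = V"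
    proof -
      have "G11 * mat_adjoint T = (V - G12 * mat_adjoint R) * (mat_adjoint Ti * mat_adjoint T)"
        unfolding G11_def using assoc_mult_mat[OF VG adj_carrier[OF Ti] adj_carrier[OF T]] .
      also have "mat_adjoint Ti * mat_adjoint T = 1\<^sub>m t" using adj_mult[OF T Ti] TTi by simp
      finally have "G11 * mat_adjoint T = V - G12 * mat_adjoint R" using V G12 R by simp
      then show ?thesis using V G12 R by (intro eq_matI, auto)
    qed
    also have "G12 * mat_adjoint L = W * Q"
    proof -
      have "G12 * mat_adjoint L = W * (mat_adjoint Lp * mat_adjoint L)"
        unfolding G12_def using W Lp L by (simp add: assoc_mult_mat[of _ t r _ r _ r])
      also have "mat_adjoint Lp * mat_adjoint L = Q" using adj_mult[OF L Lp] QLp adjQ by simp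
      finally show ?thesis .
    qed
    finally show ?thesis unfolding Y_def .
  qed
  have YP: "Y * P = Y"
  proof -
    have "Y * P = G * (mat_adjoint M * mat_adjoint P)" unfolding GM[symmetric] adjP
      using G M P by (simp add: assoc_mult_mat[of _ n n _ n _ n])
    also have "mat_adjoint M * mat_adjoint P = mat_adjoint (P * M)" using adj_mult[OF P M] by simp
    finally show ?thesis unfolding PMM GM .
  qed
  show ?thesis using XP YP unfolding X_def Y_def P_def M_def Q_def by simp
qed

lemma mat_mult_zero_vec: "(M :: complex mat) \<in> carrier_mat n m \<Longrightarrow> M *\<^sub>v 0\<^sub>v m = 0\<^sub>v n"
  by (rule eq_vecI, auto)

theorem theorem7p1:
  fixes A U T S N :: "complex mat" and n t k m :: nat
  assumes A: "A \<in> carrier_mat n n"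
    and k: "k = mat_index A"
    and U: "U \<in> carrier_mat n n" "mat_adjoint U * U = 1\<^sub>m n"
    and T: "T \<in> carrier_mat t t" "invertible_mat T"
    and t: "t = vec_space.rank n (A ^\<^sub>m k)"
    and S: "S \<in> carrier_mat t (n - t)"
    and N: "N \<in> carrier_mat (n - t) (n - t)" "N ^\<^sub>m k = 0\<^sub>m (n - t) (n - t)"
           "\<forall>j < k. N ^\<^sub>m j \<noteq> 0\<^sub>m (n - t) (n - t)"
    and dec: "A = U * four_block_mat T S (0\<^sub>m (n - t) t) N * mat_adjoint U"
    and m: "m \<ge> 1"
  shows "(mwc_inverse m A = mp_inverse A \<longleftrightarrow>
            S = 0\<^sub>m t (n - t) \<and> N = 0\<^sub>m (n - t) (n - t))
       \<and> (mwc_inverse m A = drazin A \<longleftrightarrow>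
            ttilde T S N m * proj (N ^\<^sub>m m) = mat_ipow T (int m - int k) * ttilde T S N k)
       \<and> (mwc_inverse m A = core_ep A \<longleftrightarrow>
            ttilde T S N m * N ^\<^sub>m m = 0\<^sub>m t (n - t))
       \<and> (mwc_inverse m A = dmp_inverse A \<longleftrightarrow>
            ttilde T S N m * proj (N ^\<^sub>m m) = mat_ipow T (int m - int k) * ttilde T S N k * proj N)
       \<and> (mwc_inverse m A = wc_inverse A \<longleftrightarrow>
            ttilde T S N m * proj (N ^\<^sub>m m) = T ^\<^sub>m (m - 1) * S * proj N)
       \<and> (mwc_inverse m A = mwg_inverse m A \<longleftrightarrow>
            mat_kernel (mat_adjoint (N ^\<^sub>m m)) \<subseteq> mat_kernel (ttilde T S N m))"
proof -
  have tn: "t \<le> n" using vec_space.rank_le_nc[OF pow_carrier_mat[OF A, of k]] t by simp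
  define r where "r = n - t"
  have ntr: "n = t + r" unfolding r_def using tn by simp
  have T1: "T \<in> carrier_mat t t" using T(1) .
  have S1: "S \<in> carrier_mat t r" using S unfolding r_def .
  have N1: "N \<in> carrier_mat r r" using N(1) unfolding r_def .
  have Nk: "N ^\<^sub>m k = 0\<^sub>m r r" using N(2) unfolding r_def .
  interpret uc: unit_conj U n by (unfold_locales, insert U, auto)
  define Ti where "Ti = mat_inv T"
  have Ti: "Ti \<in> carrier_mat t t" and TTi: "T * Ti = 1\<^sub>m t" and TiT: "Ti * T = 1\<^sub>m t"
    using inv_props[OF T] unfolding Ti_def by auto
  define tt where "tt j = ttilde T S N j" for j
  have tt: "tt j \<in> carrier_mat t r" for j unfolding tt_def by (rule tt_carrier[OF T1 S1 N1])
  define B0 where "B0 = four_block_mat T S (0\<^sub>m r t) N"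
  have B0: "B0 \<in> carrier_mat n n" unfolding B0_def ntr using T1 N1 by simp
  have AB0: "A = uc.cj B0" unfolding uc.cj_def B0_def dec r_def ..
  define Bp where "Bp j = four_block_mat (T ^\<^sub>m j) (tt j) (0\<^sub>m r t) (N ^\<^sub>m j)" for j
  have Bp: "Bp j \<in> carrier_mat n n" for j unfolding Bp_def ntr using T1 N1 by simp
  have Apow: "A ^\<^sub>m j = uc.cj (Bp j)" for j
  proof (induct j)
    case 0
    have "Bp 0 = 1\<^sub>m n" unfolding Bp_def tt_def tt_0[OF S1] ntr using T1 N1 by simp
    then show ?case using uc.cj_one A by simp
  next
    case (Suc j)
    have "Bp j * B0 = Bp (Suc j)" unfolding Bp_def B0_def 
      unfolding fb_mult[OF pow_carrier_mat[OF T1] T1 tt S1 pow_carrier_mat[OF N1] N1]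
      unfolding tt_def tt_Suc[OF T1 S1 N1] by simp
    then show ?case using Suc uc.cj_mult[OF Bp B0] AB0 by simp
  qed
  have hbc: "hb t r V W \<in> carrier_mat n n" if "V \<in> carrier_mat t t" for V W
    using that unfolding ntr by simp
  note cjm = uc.cj_mult
  have Z0: "0\<^sub>m t r \<in> carrier_mat t r" by simp
  have Ak: "A ^\<^sub>m k = uc.cj (hb t r (T ^\<^sub>m k) (tt k))" unfolding Apow Bp_def Nk ..
  define C where "C = uc.cj (hb t r Ti (0\<^sub>m t r))"
  have Cc: "C \<in> carrier_mat n n" unfolding C_def using hbc[OF Ti] by simp
  have TiS: "Ti * S \<in> carrier_mat t r" using Ti S1 by simp
  have CAC: "C * A * C = C"
  proof -
    have 1: "hb t r Ti (0\<^sub>m t r) * B0 = hb t r (1\<^sub>m t) (Ti * S)" unfolding B0_def hb_mult_fb[OF Ti T1 Z0 S1 N1] TiT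
      using Ti S1 N1 by simp
    have 2: "hb t r (1\<^sub>m t) (Ti * S) * hb t r Ti (0\<^sub>m t r) = hb t r Ti (0\<^sub>m t r)"
      unfolding hb_mult[OF one_carrier_mat Ti TiS Z0] using Ti by simp
    show ?thesis unfolding C_def AB0 unfolding cjm[OF hbc[OF Ti] B0] 1 cjm[OF hbc[OF one_carrier_mat] hbc[OF Ti]] 2 ..
  qed
  have adjC: "mat_adjoint C = uc.cj (hb t r (mat_adjoint Ti) (0\<^sub>m t r))"
    unfolding C_def uc.cj_adj[OF hbc[OF Ti]] hb_adj[OF Ti Z0] by simp
  have adjCc: "mat_adjoint C \<in> carrier_mat n n" using Cc by simp
  have Akc: "A ^\<^sub>m k \<in> carrier_mat n n" using A by simp
  have range_eq: "mat_range X = mat_range Y" if X: "X \<in> carrier_mat n n" and Y: "Y \<in> carrier_mat n n"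
    and W1: "W1 \<in> carrier_mat n n" and W2: "W2 \<in> carrier_mat n n" and e1: "X = Y * W1" and e2: "Y = X * W2" for X Y W1 W2
    using range_mult[OF X Y W1 e1] range_mult[OF Y X W2 e2] by auto
  have TkTiSk: "T ^\<^sub>m k * Ti ^\<^sub>m Suc k = Ti" using pow_pow_cancel[OF T1 Ti TTi, of k "Suc k"] Ti by simp
  have TiTSk: "Ti * T ^\<^sub>m Suc k = T ^\<^sub>m k"
    unfolding pow_mat_Suc_left[OF T1] using TiT T1 Ti by (simp add: assoc_mult_mat[of _ t t _ t _ t, symmetric])
  have R1: "mat_range C = mat_range (A ^\<^sub>m k)"
  proof (rule range_eq[OF Cc Akc hbc[OF pow_carrier_mat[OF Ti], of "Suc k", THEN uc.cj_carrier]
        hbc[OF pow_carrier_mat[OF T1], of "Suc k", THEN uc.cj_carrier]])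
    show "C = A ^\<^sub>m k * uc.cj (hb t r (Ti ^\<^sub>m Suc k) (0\<^sub>m t r))"
      unfolding Ak C_def cjm[OF hbc[OF pow_carrier_mat[OF T1]] hbc[OF pow_carrier_mat[OF Ti]]]
      unfolding hb_mult[OF pow_carrier_mat[OF T1] pow_carrier_mat[OF Ti] tt Z0] TkTiSk using T1 by simp
    have TT: "T * tt k \<in> carrier_mat t r" using T1 tt by simp
    have "Ti * (T * tt k) = tt k" using TiT T1 Ti tt[of k] by (simp add: assoc_mult_mat[of _ t t _ t _ r, symmetric])
    then show "A ^\<^sub>m k = C * uc.cj (hb t r (T ^\<^sub>m Suc k) (T * tt k))"
      unfolding Ak C_def cjm[OF hbc[OF Ti] hbc[OF pow_carrier_mat[OF T1]]]
      unfolding hb_mult[OF Ti pow_carrier_mat[OF T1] Z0 TT] TiTSk by simp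
  qed
  have adjTiT: "mat_adjoint Ti * mat_adjoint T = 1\<^sub>m t" using adj_mult[OF T1 Ti] TTi by simp
  have R2: "mat_range (mat_adjoint C) = mat_range (A ^\<^sub>m k)"
  proof (rule range_eq[OF adjCc Akc hbc[OF mult_carrier_mat[OF pow_carrier_mat[OF Ti] adj_carrier[OF Ti]], 
        of k, THEN uc.cj_carrier]
        hbc[OF mult_carrier_mat[OF adj_carrier[OF T1] pow_carrier_mat[OF T1]], of k, THEN uc.cj_carrier]])
    have "T ^\<^sub>m k * (Ti ^\<^sub>m k * mat_adjoint Ti) = (T ^\<^sub>m k * Ti ^\<^sub>m k) * mat_adjoint Ti"
      using T1 Ti by (simp add: assoc_mult_mat[of _ t t _ t _ t])
    also have "\<dots> = mat_adjoint Ti" unfolding pow_pow_same[OF T1 Ti TTi] using Ti by simp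
    finally have e: "T ^\<^sub>m k * (Ti ^\<^sub>m k * mat_adjoint Ti) = mat_adjoint Ti" .
    show "mat_adjoint C = A ^\<^sub>m k * uc.cj (hb t r (Ti ^\<^sub>m k * mat_adjoint Ti) (0\<^sub>m t r))"
      unfolding Ak adjC cjm[OF hbc[OF pow_carrier_mat[OF T1]] hbc[OF mult_carrier_mat[OF pow_carrier_mat[OF Ti] adj_carrier[OF Ti]]]]
      unfolding hb_mult[OF pow_carrier_mat[OF T1] mult_carrier_mat[OF pow_carrier_mat[OF Ti] adj_carrier[OF Ti]] tt Z0] e
      using T1 by simp
    have e1: "mat_adjoint Ti * (mat_adjoint T * T ^\<^sub>m k) = T ^\<^sub>m k"
      using adjTiT T1 Ti by (simp add: assoc_mult_mat[of _ t t _ t _ t, symmetric])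
    have e2: "mat_adjoint Ti * (mat_adjoint T * tt k) = tt k"
      using adjTiT T1 Ti tt[of k] by (simp add: assoc_mult_mat[of _ t t _ t _ r, symmetric])
    show "A ^\<^sub>m k = mat_adjoint C * uc.cj (hb t r (mat_adjoint T * T ^\<^sub>m k) (mat_adjoint T * tt k))"
      unfolding Ak adjC cjm[OF hbc[OF adj_carrier[OF Ti]] hbc[OF mult_carrier_mat[OF adj_carrier[OF T1] pow_carrier_mat[OF T1]]]]
      unfolding hb_mult[OF adj_carrier[OF Ti] mult_carrier_mat[OF adj_carrier[OF T1] pow_carrier_mat[OF T1]] Z0
        mult_carrier_mat[OF adj_carrier[OF T1] tt]] e1 e2 by simp
  qed
  have cep: "core_ep A = C" by (rule core_ep_eq[OF A Cc CAC], unfold k[symmetric], fact R1, fact R2)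
  have Cpow: "C ^\<^sub>m Suc j = uc.cj (hb t r (Ti ^\<^sub>m Suc j) (0\<^sub>m t r))" for j
  proof (induct j)
    case 0 then show ?case unfolding C_def using Cc Ti by simp
  next
    case (Suc j)
    have "C ^\<^sub>m Suc (Suc j) = C ^\<^sub>m Suc j * C" by simp
    also have "\<dots> = uc.cj (hb t r (Ti ^\<^sub>m Suc j) (0\<^sub>m t r) * hb t r Ti (0\<^sub>m t r))"
      unfolding Suc unfolding C_def by (rule cjm[OF hbc[OF pow_carrier_mat[OF Ti]] hbc[OF Ti]])
    also have "\<dots> = uc.cj (hb t r (Ti ^\<^sub>m Suc (Suc j)) (0\<^sub>m t r))"
      unfolding hb_mult[OF pow_carrier_mat[OF Ti] Ti Z0 Z0] using Ti by simp
    finally show ?case .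
  qed
  define Wg where "Wg = Ti ^\<^sub>m Suc m * tt m"
  have Wg: "Wg \<in> carrier_mat t r" unfolding Wg_def by (rule mult_carrier_mat[OF pow_carrier_mat[OF Ti] tt])
  have TiSmTm: "Ti ^\<^sub>m Suc m * T ^\<^sub>m m = Ti" using pow_pow_cancel[OF Ti T1 TiT, of "Suc m" m] Ti by simp
  have mwg: "mwg_inverse m A = uc.cj (hb t r Ti Wg)"
  proof -
    have "mwg_inverse m A = uc.cj (hb t r (Ti ^\<^sub>m Suc m) (0\<^sub>m t r) * Bp m)"
      unfolding mwg_inverse_def cep Cpow Apow by (rule cjm[OF hbc[OF pow_carrier_mat[OF Ti]] Bp])
    also have "hb t r (Ti ^\<^sub>m Suc m) (0\<^sub>m t r) * Bp m = hb t r Ti Wg"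
      unfolding Bp_def hb_mult_fb[OF pow_carrier_mat[OF Ti] pow_carrier_mat[OF T1] Z0 tt pow_carrier_mat[OF N1]]
      unfolding TiSmTm Wg_def[symmetric] left_mult_zero_mat[OF pow_carrier_mat[OF N1]] right_add_zero_mat[OF Wg] ..
    finally show ?thesis .
  qed
  define Q where "Q = proj (N ^\<^sub>m m)"
  have Q: "Q \<in> carrier_mat r r" unfolding Q_def using proj_props(1)[OF pow_carrier_mat[OF N1]] .
  define Wc where "Wc = Wg * Q"
  have Wc: "Wc \<in> carrier_mat t r" unfolding Wc_def by (rule mult_carrier_mat[OF Wg Q])
  have mwc: "mwc_inverse m A = uc.cj (hb t r Ti Wc)"
  proof -
    have "mwc_inverse m A = uc.cj (hb t r Ti Wg) * uc.cj (proj (Bp m))"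
      unfolding mwc_inverse_def mwg Apow uc.cj_proj[OF Bp] ..
    also have "\<dots> = uc.cj (hb t r Ti Wg * proj (Bp m))" by (rule cjm[OF hbc[OF Ti] proj_props(1)[OF Bp]])
    also have "hb t r Ti Wg * proj (Bp m) = hb t r Ti Wc" unfolding Bp_def Wc_def Q_def
      by (rule blockG[OF Ti Wg pow_carrier_mat[OF T1] pow_carrier_mat[OF Ti] pow_pow_same[OF T1 Ti TTi] tt
          pow_carrier_mat[OF N1]])
    finally show ?thesis .
  qed
  define Z where "Z = Ti ^\<^sub>m Suc k * tt k"
  have Zc: "Z \<in> carrier_mat t r" unfolding Z_def by (rule mult_carrier_mat[OF pow_carrier_mat[OF Ti] tt])
  define D where "D = uc.cj (hb t r Ti Z)"
  have Dc: "D \<in> carrier_mat n n" unfolding D_def using hbc[OF Ti] by simp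
  have TtN: "T * tt k = T ^\<^sub>m k * S + tt k * N"
    using tt_comm[OF T1 S1 N1, of k] tt_Suc[OF T1 S1 N1, of k] Nk S1 T1 tt[of k] unfolding tt_def by simp
  have TZ: "T * Z = Ti ^\<^sub>m k * tt k"
  proof -
    have "T * Z = (T ^\<^sub>m 1 * Ti ^\<^sub>m Suc k) * tt k" unfolding Z_def using T1 Ti tt[of k]
      by (simp add: assoc_mult_mat[of _ t t _ t _ r])
    also have "T ^\<^sub>m 1 * Ti ^\<^sub>m Suc k = Ti ^\<^sub>m k" using pow_pow_cancel[OF T1 Ti TTi, of 1 "Suc k"] T1 Ti by simp
    finally show ?thesis .
  qed
  have TiSZN: "Ti * S + Z * N = T * Z"
  proof -
    have TiSkT: "Ti ^\<^sub>m Suc k * T = Ti ^\<^sub>m k" 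
      using pow_pow_cancel[OF Ti T1 TiT, of "Suc k" 1] T1 by simp
    have TiSkTk: "Ti ^\<^sub>m Suc k * T ^\<^sub>m k = Ti" using pow_pow_cancel[OF Ti T1 TiT, of "Suc k" k] Ti by simp
    have "Ti ^\<^sub>m Suc k * (T * tt k) = Ti ^\<^sub>m Suc k * (T ^\<^sub>m k * S) + Ti ^\<^sub>m Suc k * (tt k * N)"
      unfolding TtN by (rule mult_add_distrib_mat[OF pow_carrier_mat[OF Ti]], insert T1 S1 tt[of k] N1, auto)
    also have "Ti ^\<^sub>m Suc k * (T ^\<^sub>m k * S) = (Ti ^\<^sub>m Suc k * T ^\<^sub>m k) * S"
      by (rule assoc_mult_mat[OF pow_carrier_mat[OF Ti] pow_carrier_mat[OF T1] S1, symmetric])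
    also have "\<dots> = Ti * S" unfolding TiSkTk ..
    also have "Ti ^\<^sub>m Suc k * (tt k * N) = Z * N" unfolding Z_def using Ti tt[of k] N1
      by (simp add: assoc_mult_mat[of _ t t _ r _ r])
    finally have 1: "Ti ^\<^sub>m Suc k * (T * tt k) = Ti * S + Z * N" .
    have "Ti ^\<^sub>m Suc k * (T * tt k) = (Ti ^\<^sub>m Suc k * T) * tt k"
      by (rule assoc_mult_mat[OF pow_carrier_mat[OF Ti] T1 tt, symmetric])
    also have "\<dots> = Ti ^\<^sub>m k * tt k" unfolding TiSkT ..
    finally have "Ti ^\<^sub>m Suc k * (T * tt k) = Ti ^\<^sub>m k * tt k" .
    with 1 TZ show ?thesis by simp
  qed
  have TZc: "T * Z \<in> carrier_mat t r" using T1 Zc by simp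
  have DA: "D * A = uc.cj (hb t r (1\<^sub>m t) (T * Z))"
    unfolding D_def AB0 unfolding cjm[OF hbc[OF Ti] B0] unfolding B0_def hb_mult_fb[OF Ti T1 Zc S1 N1] TiT TiSZN ..
  have AD: "A * D = uc.cj (hb t r (1\<^sub>m t) (T * Z))"
    unfolding D_def AB0 unfolding cjm[OF B0 hbc[OF Ti]] unfolding B0_def fb_mult_hb[OF Ti T1 Zc S1 N1] TTi ..
  have DAD: "D * A * D = D" unfolding DA unfolding D_def cjm[OF hbc[OF one_carrier_mat] hbc[OF Ti]]
    unfolding hb_mult[OF one_carrier_mat Ti TZc Zc] using Ti Zc by simp
  have NSk: "N ^\<^sub>m Suc k = 0\<^sub>m r r" using Nk N1 by simp
  have DASk: "D * A ^\<^sub>m Suc k = A ^\<^sub>m k"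
  proof -
    have ttSk: "Ti * tt (Suc k) = tt k"
    proof -
      have "tt (Suc k) = T * tt k" using tt_comm[OF T1 S1 N1, of k] Nk S1 T1 tt[of k] unfolding tt_def by simp
      then show ?thesis using TiT T1 Ti tt[of k] by (simp add: assoc_mult_mat[of _ t t _ t _ r, symmetric])
    qed
    have "D * A ^\<^sub>m Suc k = uc.cj (hb t r Ti Z * Bp (Suc k))" unfolding D_def Apow by (rule cjm[OF hbc[OF Ti] Bp])
    also have "hb t r Ti Z * Bp (Suc k) = hb t r (T ^\<^sub>m k) (tt k)"
      unfolding Bp_def unfolding hb_mult_fb[OF Ti pow_carrier_mat[OF T1] Zc tt pow_carrier_mat[OF N1]]
      unfolding TiTSk NSk ttSk right_mult_zero_mat[OF Zc] right_add_zero_mat[OF tt] ..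
    finally show ?thesis unfolding Ak .
  qed
  have draz: "drazin A = D" by (rule drazin_eq[OF A Dc DAD], unfold AD DA, simp, unfold k[symmetric], fact DASk)
  have Ac: "A \<in> carrier_mat n n" by (rule A)
  have projA: "proj A = uc.cj (proj B0)" unfolding AB0 by (rule uc.cj_proj[OF B0])
  define PN where "PN = proj N"
  have PN: "PN \<in> carrier_mat r r" unfolding PN_def using proj_props(1)[OF N1] .
  have ZPN: "Z * PN \<in> carrier_mat t r" using Zc PN by simp
  have dmp: "dmp_inverse A = uc.cj (hb t r Ti (Z * PN))"
  proof -
    have "dmp_inverse A = D * proj A" unfolding dmp_inverse_def draz proj_def
      using Dc A mp_inverse(1)[OF A] by (simp add: assoc_mult_mat[of _ n n _ n _ n])
    also have "\<dots> = uc.cj (hb t r Ti Z * proj B0)" unfolding projA D_def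
      by (rule cjm[OF hbc[OF Ti] proj_props(1)[OF B0]])
    also have "hb t r Ti Z * proj B0 = hb t r Ti (Z * PN)" unfolding B0_def PN_def
      by (rule blockG[OF Ti Zc T1 Ti TTi S1 N1])
    finally show ?thesis .
  qed
  define Y2 where "Y2 = Ti ^\<^sub>m Suc (Suc 0) * S"
  have Y2: "Y2 \<in> carrier_mat t r" unfolding Y2_def by (rule mult_carrier_mat[OF pow_carrier_mat[OF Ti] S1])
  have Y2PN: "Y2 * PN \<in> carrier_mat t r" using Y2 PN by simp
  have wg: "wg_inverse A = uc.cj (hb t r Ti Y2)"
  proof -
    have Ti2T: "Ti ^\<^sub>m Suc (Suc 0) * T = Ti" using pow_pow_cancel[OF Ti T1 TiT, of "Suc (Suc 0)" 1] Ti T1 by simp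
    have "wg_inverse A = uc.cj (hb t r (Ti ^\<^sub>m Suc (Suc 0)) (0\<^sub>m t r) * B0)"
      unfolding wg_inverse_def cep numeral_2_eq_2 Cpow unfolding AB0 by (rule cjm[OF hbc[OF pow_carrier_mat[OF Ti]] B0])
    also have "hb t r (Ti ^\<^sub>m Suc (Suc 0)) (0\<^sub>m t r) * B0 = hb t r Ti Y2"
      unfolding B0_def unfolding hb_mult_fb[OF pow_carrier_mat[OF Ti] T1 Z0 S1 N1]
      unfolding Ti2T Y2_def[symmetric] left_mult_zero_mat[OF N1] right_add_zero_mat[OF Y2] ..
    finally show ?thesis .
  qed
  have wc: "wc_inverse A = uc.cj (hb t r Ti (Y2 * PN))"
  proof -
    have "wc_inverse A = uc.cj (hb t r Ti Y2 * proj B0)" unfolding wc_inverse_def wg projA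
      by (rule cjm[OF hbc[OF Ti] proj_props(1)[OF B0]])
    also have "hb t r Ti Y2 * proj B0 = hb t r Ti (Y2 * PN)" unfolding B0_def PN_def
      by (rule blockG[OF Ti Y2 T1 Ti TTi S1 N1])
    finally show ?thesis .
  qed
  have ttQ: "tt m * Q \<in> carrier_mat t r" by (rule mult_carrier_mat[OF tt Q])
  have Wc': "Wc = Ti ^\<^sub>m Suc m * (tt m * Q)" unfolding Wc_def Wg_def
    by (rule assoc_mult_mat[OF pow_carrier_mat[OF Ti] tt Q])
  have cmp: "mwc_inverse m A = uc.cj (hb t r Ti Y) \<longleftrightarrow> tt m * Q = T ^\<^sub>m Suc m * Y"
    if Y: "Y \<in> carrier_mat t r" for Y
  proof -
    have "mwc_inverse m A = uc.cj (hb t r Ti Y) \<longleftrightarrow> Wc = Y"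
      unfolding mwc uc.cj_inj_iff[OF hbc[OF Ti] hbc[OF Ti]] hb_inj[OF Ti Ti Wc Y] by simp
    also have "\<dots> \<longleftrightarrow> tt m * Q = T ^\<^sub>m Suc m * Y" unfolding Wc' by (rule inv_pow_eq_iff[OF T1 Ti TTi TiT ttQ Y])
    finally show ?thesis .
  qed
  have TmTi: "T ^\<^sub>m Suc m * (Ti ^\<^sub>m a * X) = (if a \<le> Suc m then T ^\<^sub>m (Suc m - a) else Ti ^\<^sub>m (a - Suc m)) * X"
    if X: "X \<in> carrier_mat t r" for X a
    using assoc_mult_mat[OF pow_carrier_mat[OF T1] pow_carrier_mat[OF Ti] X, of "Suc m" a]
      pow_pow_cancel[OF T1 Ti TTi, of "Suc m" a] by simp
  have ipow: "mat_ipow T (int m - int k) = (if Suc k \<le> Suc m then T ^\<^sub>m (Suc m - Suc k) else Ti ^\<^sub>m (Suc k - Suc m))"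
    unfolding mat_ipow_def Ti_def by (cases "k \<le> m", auto simp: nat_diff_distrib)
  have ipowc: "mat_ipow T (int m - int k) \<in> carrier_mat t t" unfolding ipow using T1 Ti by simp
  note QP = proj_props[OF pow_carrier_mat[OF N1, of m], folded Q_def]
  have Km: "N ^\<^sub>m m \<in> carrier_mat r r" using N1 by simp
  have Kp: "mp_inverse (N ^\<^sub>m m) \<in> carrier_mat r r" using mp_inverse(1)[OF Km] .
  have ttS: "tt m \<in> carrier_mat t r" by (rule tt)
  have partb: "mwc_inverse m A = drazin A \<longleftrightarrow> tt m * Q = mat_ipow T (int m - int k) * tt k"
    unfolding draz D_def cmp[OF Zc] unfolding Z_def TmTi[OF tt] ipow ..
  have partc: "mwc_inverse m A = core_ep A \<longleftrightarrow> tt m * N ^\<^sub>m m = 0\<^sub>m t r"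
  proof -
    have "mwc_inverse m A = core_ep A \<longleftrightarrow> tt m * Q = 0\<^sub>m t r"
      unfolding cep C_def cmp[OF Z0] right_mult_zero_mat[OF pow_carrier_mat[OF T1]] ..
    also have "\<dots> \<longleftrightarrow> tt m * N ^\<^sub>m m = 0\<^sub>m t r"
    proof
      assume h: "tt m * Q = 0\<^sub>m t r"
      have "tt m * N ^\<^sub>m m = tt m * (Q * N ^\<^sub>m m)" using QP(4) by simp
      also have "\<dots> = (tt m * Q) * N ^\<^sub>m m" using assoc_mult_mat[OF ttS Q Km] by simp
      finally have "tt m * N ^\<^sub>m m = (tt m * Q) * N ^\<^sub>m m" .
      then show "tt m * N ^\<^sub>m m = 0\<^sub>m t r" unfolding h left_mult_zero_mat[OF Km] .
    next
      assume h: "tt m * N ^\<^sub>m m = 0\<^sub>m t r"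
      have "tt m * Q = (tt m * N ^\<^sub>m m) * mp_inverse (N ^\<^sub>m m)" unfolding QP(5)
        using assoc_mult_mat[OF ttS Km Kp] by simp
      then show "tt m * Q = 0\<^sub>m t r" unfolding h left_mult_zero_mat[OF Kp] .
    qed
    finally show ?thesis .
  qed
  have partd: "mwc_inverse m A = dmp_inverse A \<longleftrightarrow> tt m * Q = mat_ipow T (int m - int k) * tt k * PN"
  proof -
    have ttPN: "tt k * PN \<in> carrier_mat t r" using mult_carrier_mat[OF tt PN] .
    have "Z * PN = Ti ^\<^sub>m Suc k * (tt k * PN)" unfolding Z_def by (rule assoc_mult_mat[OF pow_carrier_mat[OF Ti] tt PN])
    then have "T ^\<^sub>m Suc m * (Z * PN) = T ^\<^sub>m Suc m * (Ti ^\<^sub>m Suc k * (tt k * PN))" by simp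
    also have "\<dots> = mat_ipow T (int m - int k) * (tt k * PN)" unfolding TmTi[OF ttPN] ipow ..
    also have "\<dots> = mat_ipow T (int m - int k) * tt k * PN" using assoc_mult_mat[OF ipowc tt PN] by simp
    finally have e1: "T ^\<^sub>m Suc m * (Z * PN) = mat_ipow T (int m - int k) * tt k * PN" .
    show ?thesis unfolding dmp cmp[OF ZPN] e1 ..
  qed
  have parte: "mwc_inverse m A = wc_inverse A \<longleftrightarrow> tt m * Q = T ^\<^sub>m (m - 1) * S * PN"
  proof -
    have SPN: "S * PN \<in> carrier_mat t r" using mult_carrier_mat[OF S1 PN] .
    have "Y2 * PN = Ti ^\<^sub>m Suc (Suc 0) * (S * PN)" unfolding Y2_def by (rule assoc_mult_mat[OF pow_carrier_mat[OF Ti] S1 PN])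
    moreover have "Suc m - Suc (Suc 0) = m - 1" "Suc (Suc 0) \<le> Suc m" using m by auto
    ultimately have "T ^\<^sub>m Suc m * (Y2 * PN) = T ^\<^sub>m (m - 1) * (S * PN)" using TmTi[OF SPN, of "Suc (Suc 0)"] by simp
    also have "\<dots> = T ^\<^sub>m (m - 1) * S * PN" using assoc_mult_mat[OF pow_carrier_mat[OF T1] S1 PN, of "m - 1"] by simp
    finally have e1: "T ^\<^sub>m Suc m * (Y2 * PN) = T ^\<^sub>m (m - 1) * S * PN" .
    show ?thesis unfolding wc cmp[OF Y2PN] e1 ..
  qed
  have partf: "mwc_inverse m A = mwg_inverse m A \<longleftrightarrow> mat_kernel (mat_adjoint (N ^\<^sub>m m)) \<subseteq> mat_kernel (tt m)"
  proof -
    have "mwc_inverse m A = mwg_inverse m A \<longleftrightarrow> tt m * Q = tt m"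
      unfolding mwg cmp[OF Wg] unfolding Wg_def TmTi[OF tt] using tt[of m] T1 by simp
    also have "\<dots> \<longleftrightarrow> mat_kernel (mat_adjoint (N ^\<^sub>m m)) \<subseteq> mat_kernel (tt m)"
    proof
      assume h: "tt m * Q = tt m"
      show "mat_kernel (mat_adjoint (N ^\<^sub>m m)) \<subseteq> mat_kernel (tt m)"
      proof
        fix v assume v: "v \<in> mat_kernel (mat_adjoint (N ^\<^sub>m m))"
        then have vc: "v \<in> carrier_vec r" and kv: "mat_adjoint (N ^\<^sub>m m) *\<^sub>v v = 0\<^sub>v r"
          unfolding mat_kernel_def using Km by auto
        have "Q *\<^sub>v v = mat_adjoint Q *\<^sub>v v" unfolding QP(2) ..
        also have "mat_adjoint Q = mat_adjoint (mp_inverse (N ^\<^sub>m m)) * mat_adjoint (N ^\<^sub>m m)"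
          unfolding QP(5) by (rule adj_mult[OF Km Kp])
        also have "\<dots> *\<^sub>v v = 0\<^sub>v r" using assoc_mult_mat_vec[OF adj_carrier[OF Kp] adj_carrier[OF Km] vc] kv mat_mult_zero_vec[OF adj_carrier[OF Kp]] by simp
        finally have Qv: "Q *\<^sub>v v = 0\<^sub>v r" .
        have "tt m *\<^sub>v v = (tt m * Q) *\<^sub>v v" unfolding h ..
        also have "\<dots> = 0\<^sub>v t" using assoc_mult_mat_vec[OF ttS Q vc] Qv mat_mult_zero_vec[OF ttS] by simp
        finally show "v \<in> mat_kernel (tt m)" unfolding mat_kernel_def using vc ttS by auto
      qed
    next
      assume h: "mat_kernel (mat_adjoint (N ^\<^sub>m m)) \<subseteq> mat_kernel (tt m)"
      have AQ: "mat_adjoint (N ^\<^sub>m m) * Q = mat_adjoint (N ^\<^sub>m m)"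
      proof -
        have "mat_adjoint (N ^\<^sub>m m) * Q = mat_adjoint (N ^\<^sub>m m) * mat_adjoint Q" unfolding QP(2) ..
        also have "\<dots> = mat_adjoint (Q * N ^\<^sub>m m)" using adj_mult[OF Q Km] by simp
        finally show ?thesis unfolding QP(4) .
      qed
      show "tt m * Q = tt m"
      proof (rule mat_col_eqI)
        fix j assume "j < dim_col (tt m)"
        then have j: "j < r" using ttS by simp
        define x :: "complex vec" where "x = unit_vec r j"
        have x: "x \<in> carrier_vec r" unfolding x_def by simp
        have y: "Q *\<^sub>v x \<in> carrier_vec r" using Q x by simp
        have "mat_adjoint (N ^\<^sub>m m) *\<^sub>v (x - Q *\<^sub>v x) = mat_adjoint (N ^\<^sub>m m) *\<^sub>v x - mat_adjoint (N ^\<^sub>m m) *\<^sub>v (Q *\<^sub>v x)"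
          by (rule mult_minus_distrib_mat_vec[OF adj_carrier[OF Km] x y])
        also have "mat_adjoint (N ^\<^sub>m m) *\<^sub>v (Q *\<^sub>v x) = mat_adjoint (N ^\<^sub>m m) *\<^sub>v x"
          using assoc_mult_mat_vec[OF adj_carrier[OF Km] Q x] AQ by simp
        also have "mat_adjoint (N ^\<^sub>m m) *\<^sub>v x - mat_adjoint (N ^\<^sub>m m) *\<^sub>v x = 0\<^sub>v r"
          by (rule eq_vecI, insert Km x, auto)
        finally have "x - Q *\<^sub>v x \<in> mat_kernel (mat_adjoint (N ^\<^sub>m m))" unfolding mat_kernel_def using x y Km by auto
        with h have "x - Q *\<^sub>v x \<in> mat_kernel (tt m)" by auto
        then have k0: "tt m *\<^sub>v (x - Q *\<^sub>v x) = 0\<^sub>v t" unfolding mat_kernel_def using ttS by auto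
        have "tt m *\<^sub>v (x - Q *\<^sub>v x) = tt m *\<^sub>v x - tt m *\<^sub>v (Q *\<^sub>v x)"
          by (rule mult_minus_distrib_mat_vec[OF ttS x y])
        with k0 have d: "tt m *\<^sub>v x - tt m *\<^sub>v (Q *\<^sub>v x) = 0\<^sub>v t" by simp
        have e: "tt m *\<^sub>v x = tt m *\<^sub>v (Q *\<^sub>v x)"
        proof (rule eq_vecI)
          fix i assume "i < dim_vec (tt m *\<^sub>v (Q *\<^sub>v x))"
          then have i: "i < t" using ttS by simp
          from arg_cong[OF d, of "\<lambda>v. v $ i"] i ttS x y
          show "(tt m *\<^sub>v x) $ i = (tt m *\<^sub>v (Q *\<^sub>v x)) $ i" by simp
        qed (insert ttS, simp)
        have "col (tt m * Q) j = tt m *\<^sub>v col Q j" by (rule col_mult2[OF ttS Q j])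
        also have "col Q j = Q *\<^sub>v x" unfolding x_def using mult_unit_vec[OF Q j] by simp
        also have "tt m *\<^sub>v (Q *\<^sub>v x) = col (tt m) j" unfolding e[symmetric] unfolding x_def using mult_unit_vec[OF ttS j] .
        finally show "col (tt m * Q) j = col (tt m) j" .
      qed (insert ttS Q, auto)
    qed
    finally show ?thesis .
  qed
  have parta: "mwc_inverse m A = mp_inverse A \<longleftrightarrow> S = 0\<^sub>m t r \<and> N = 0\<^sub>m r r"
  proof
    assume h: "S = 0\<^sub>m t r \<and> N = 0\<^sub>m r r"
    then have S0: "S = 0\<^sub>m t r" and N0: "N = 0\<^sub>m r r" by auto
    from m obtain m' where m': "m = Suc m'" by (cases m, auto)
    have Nm: "N ^\<^sub>m m = 0\<^sub>m r r" unfolding m' pow_mat.simps N0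
      by (rule right_mult_zero_mat[OF pow_carrier_mat], simp)
    have Q0: "Q = 0\<^sub>m r r" unfolding Q_def Nm proj_def
      by (rule left_mult_zero_mat[OF mp_inverse(1)], simp)
    have Wc0: "Wc = 0\<^sub>m t r" unfolding Wc_def Q0 by (rule right_mult_zero_mat[OF Wg])
    have B0': "B0 = hb t r T (0\<^sub>m t r)" unfolding B0_def S0 N0 ..
    define H where "H = hb t r Ti (0\<^sub>m t r)"
    have H: "H \<in> carrier_mat n n" unfolding H_def by (rule hbc[OF Ti])
    have BH: "B0 * H = hb t r (1\<^sub>m t) (0\<^sub>m t r)" unfolding B0' H_def hb_mult[OF T1 Ti Z0 Z0] TTi
      using T1 by simp
    have HB: "H * B0 = hb t r (1\<^sub>m t) (0\<^sub>m t r)" unfolding B0' H_def hb_mult[OF Ti T1 Z0 Z0] TiT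
      using Ti by simp
    have adj1: "mat_adjoint (hb t r (1\<^sub>m t) (0\<^sub>m t r)) = hb t r (1\<^sub>m t) (0\<^sub>m t r)"
      unfolding hb_adj[OF one_carrier_mat Z0] by simp
    have pen: "penrose B0 H" unfolding penrose_def
    proof (intro conjI)
      show "B0 * H * B0 = B0" unfolding BH unfolding B0' hb_mult[OF one_carrier_mat T1 Z0 Z0] using T1 by simp
      show "H * B0 * H = H" unfolding HB unfolding H_def hb_mult[OF one_carrier_mat Ti Z0 Z0] using Ti by simp
      show "mat_adjoint (B0 * H) = B0 * H" unfolding BH adj1 ..
      show "mat_adjoint (H * B0) = H * B0" unfolding HB adj1 ..
    qed
    have "mp_inverse A = uc.cj H" unfolding AB0 uc.cj_mp[OF B0] mp_inverse_eq[OF B0 H pen] ..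
    then show "mwc_inverse m A = mp_inverse A" unfolding mwc Wc0 H_def by simp
  next
    assume h: "mwc_inverse m A = mp_inverse A"
    define H where "H = hb t r Ti Wc"
    have H: "H \<in> carrier_mat n n" unfolding H_def by (rule hbc[OF Ti])
    have pen: "penrose (uc.cj B0) (uc.cj H)"
    proof -
      have p1: "penrose A (mwc_inverse m A)" using mp_inverse(2)[OF A] h by simp
      have "mwc_inverse m A = uc.cj H" unfolding mwc H_def ..
      with p1 have "penrose A (uc.cj H)" by simp
      then show ?thesis using AB0 by simp
    qed
    have TWc: "T * Wc \<in> carrier_mat t r" using mult_carrier_mat[OF T1 Wc] .
    have BH: "B0 * H = hb t r (1\<^sub>m t) (T * Wc)" unfolding B0_def H_def fb_mult_hb[OF Ti T1 Wc S1 N1] TTi ..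
    have "uc.cj (B0 * H * B0) = uc.cj B0" using pen unfolding penrose_def 
      using cjm[OF B0 H] cjm[OF mult_carrier_mat[OF B0 H] B0] by simp
    then have "B0 * H * B0 = B0" using uc.cj_inj_iff[OF mult_carrier_mat[OF mult_carrier_mat[OF B0 H] B0] B0] by simp
    then have "four_block_mat T (S + T * Wc * N) (0\<^sub>m r t) (0\<^sub>m r r) = four_block_mat T S (0\<^sub>m r t) N"
      unfolding BH unfolding B0_def hb_mult_fb[OF one_carrier_mat T1 TWc S1 N1] using T1 S1 by simp
    from fb_inj[OF T1 T1 _ S1 zero_carrier_mat zero_carrier_mat zero_carrier_mat N1 this]
    have N0: "N = 0\<^sub>m r r" using S1 TWc N1 by auto
    have TiSc: "Ti * S \<in> carrier_mat t r" using mult_carrier_mat[OF Ti S1] .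
    have HB: "H * B0 = hb t r (1\<^sub>m t) (Ti * S)" unfolding B0_def H_def unfolding hb_mult_fb[OF Ti T1 Wc S1 N1] unfolding TiT N0
      right_mult_zero_mat[OF Wc] right_add_zero_mat[OF TiSc] ..
    have "uc.cj (mat_adjoint (H * B0)) = uc.cj (H * B0)" using pen unfolding penrose_def
      using cjm[OF H B0] uc.cj_adj[OF mult_carrier_mat[OF H B0]] by simp
    then have "mat_adjoint (H * B0) = H * B0" 
      using uc.cj_inj_iff[OF adj_carrier[OF mult_carrier_mat[OF H B0]] mult_carrier_mat[OF H B0]] by simp
    then have "four_block_mat (1\<^sub>m t) (0\<^sub>m t r) (mat_adjoint (Ti * S)) (0\<^sub>m r r) = hb t r (1\<^sub>m t) (Ti * S)"
      unfolding HB hb_adj[OF one_carrier_mat TiSc] by simp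
    from fb_inj[OF one_carrier_mat one_carrier_mat Z0 TiSc adj_carrier[OF TiSc] zero_carrier_mat zero_carrier_mat zero_carrier_mat this]
    have TiS0: "Ti * S = 0\<^sub>m t r" by simp
    have "S = T * (Ti * S)" using assoc_mult_mat[OF T1 Ti S1] TTi S1 by simp
    then have S0: "S = 0\<^sub>m t r" unfolding TiS0 using right_mult_zero_mat[OF T1] by simp
    from S0 N0 show "S = 0\<^sub>m t r \<and> N = 0\<^sub>m r r" by simp
  qed
  show ?thesis unfolding r_def[symmetric] tt_def[symmetric] Q_def[symmetric] PN_def[symmetric]
    using parta partb partc partd parte partf by blast
qed

end
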